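(* Let $t>1$ be an integer, let $x,y$ be elements both lying in $A(t)$ or both lying in $B(t)$, with $x,y\notin H(t)$, and suppose $x=(c\rho_t)^{\alpha}(d\rho_t)^{\beta}\,y\,(c\rho_t)^{\gamma}(d\rho_t)^{\delta}$ for some integers $\alpha,\beta,\gamma,\delta$. If $x,y\in A(t)$, then $\alpha+\gamma$, $\beta$ and $\delta$ are uniquely determined modulo $t$ by this equality. If $x,y\in B(t)$, then $\beta+\delta$, $\alpha$ and $\gamma$ are uniquely determined modulo $t$ by this equality.
   Context: Fix integers $m,n>1$ and let $G_{mn}=\langle a,b;\ [a^m,b^n]=1\rangle$; $c=a^m$, $d=b^n$, $H=\langle c,d\rangle$, $A=\langle a,H\rangle$, $B=\langle b,H\rangle$. For an integer $t>1$ let $G_{mn}(t)=\langle a,b;\ [a^m,b^n]=1,\ a^{mt}=b^{nt}=1\rangle$, $\rho_t:G_{mn}\to G_{mn}(t)$ the natural homomorphism, $H(t)=H\rho_t\cong H/H^t$ (so $c\rho_t=cH^t$, $d\rho_t=dH^t$), $A(t)=A\rho_t$, $B(t)=B\rho_t$. *)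

theory Defs
  imports "HOL-Algebra.Algebra" "HOL-Number_Theory.Cong"
begin

text \<open>Words over the generators a (False) and b (True); a letter (g, i) is
  the generator g if i = False and its inverse if i = True.\<close>
type_synonym word = "(bool \<times> bool) list"

definition ltr :: "bool \<Rightarrow> word" where "ltr g = [(g, False)]"

definition winv :: "word \<Rightarrow> word" where
  "winv w = rev (map (\<lambda>(g, i). (g, \<not> i)) w)"

definition wpow :: "word \<Rightarrow> nat \<Rightarrow> word" where
  "wpow w k = concat (replicate k w)"

definition relators :: "nat \<Rightarrow> nat \<Rightarrow> nat \<Rightarrow> word set" where
  "relators m n t =
     { winv (wpow (ltr False) m) @ winv (wpow (ltr True) n) @ wpow (ltr False) m @ wpow (ltr True) n,
       wpow (ltr False) (m * t),
       wpow (ltr True) (n * t) }"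

inductive weq :: "nat \<Rightarrow> nat \<Rightarrow> nat \<Rightarrow> word \<Rightarrow> word \<Rightarrow> bool" for m n t where
  weq_refl: "weq m n t u u"
| weq_sym: "weq m n t u v \<Longrightarrow> weq m n t v u"
| weq_trans: "weq m n t u v \<Longrightarrow> weq m n t v w \<Longrightarrow> weq m n t u w"
| weq_cancel: "weq m n t (u @ [(g, i), (g, \<not> i)] @ v) (u @ v)"
| weq_rel: "r \<in> relators m n t \<Longrightarrow> weq m n t (u @ r @ v) (u @ v)"

definition Gmnt :: "nat \<Rightarrow> nat \<Rightarrow> nat \<Rightarrow> word set monoid" where
  "Gmnt m n t =
    \<lparr> carrier = range (\<lambda>w. Collect (weq m n t w)),
      monoid.mult = (\<lambda>P Q. {w. \<exists>x y. x \<in> P \<and> y \<in> Q \<and> weq m n t w (x @ y)}),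
      monoid.one = Collect (weq m n t []) \<rparr>"

definition gen_a :: "nat \<Rightarrow> nat \<Rightarrow> nat \<Rightarrow> word set" where
  "gen_a m n t = Collect (weq m n t (ltr False))"

definition gen_b :: "nat \<Rightarrow> nat \<Rightarrow> nat \<Rightarrow> word set" where
  "gen_b m n t = Collect (weq m n t (ltr True))"

text \<open>c rho_t = a^m and d rho_t = b^n in G_mn(t).\<close>
definition gen_c :: "nat \<Rightarrow> nat \<Rightarrow> nat \<Rightarrow> word set" where
  "gen_c m n t = gen_a m n t [^]\<^bsub>Gmnt m n t\<^esub> m"

definition gen_d :: "nat \<Rightarrow> nat \<Rightarrow> nat \<Rightarrow> word set" where
  "gen_d m n t = gen_b m n t [^]\<^bsub>Gmnt m n t\<^esub> n"

definition Ht :: "nat \<Rightarrow> nat \<Rightarrow> nat \<Rightarrow> word set set" where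
  "Ht m n t = generate (Gmnt m n t) {gen_c m n t, gen_d m n t}"

definition At :: "nat \<Rightarrow> nat \<Rightarrow> nat \<Rightarrow> word set set" where
  "At m n t = generate (Gmnt m n t) (insert (gen_a m n t) (Ht m n t))"

definition Bt :: "nat \<Rightarrow> nat \<Rightarrow> nat \<Rightarrow> word set set" where
  "Bt m n t = generate (Gmnt m n t) (insert (gen_b m n t) (Ht m n t))"

end

theory Submission
  imports Defs
begin
abbreviation cls :: "nat \<Rightarrow> nat \<Rightarrow> nat \<Rightarrow> word \<Rightarrow> word set" where
  "cls m n t w \<equiv> Collect (weq m n t w)"

lemma weq_app: "weq m n t u v \<Longrightarrow> weq m n t (p @ u @ q) (p @ v @ q)"
proof (induction rule: weq.induct)
  case (weq_refl u) then show ?case by (rule weq.weq_refl)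
next
  case (weq_sym u v) then show ?case by (metis weq.weq_sym)
next
  case (weq_trans u v w) then show ?case by (metis weq.weq_trans)
next
  case (weq_cancel u g i v)
  have "weq m n t ((p @ u) @ [(g, i), (g, \<not> i)] @ (v @ q)) ((p @ u) @ (v @ q))"
    by (rule weq.weq_cancel)
  then show ?case by simp
next
  case (weq_rel r u v)
  have "weq m n t ((p @ u) @ r @ (v @ q)) ((p @ u) @ (v @ q))"
    by (rule weq.weq_rel[OF weq_rel])
  then show ?case by simp
qed

lemma weq_cong: "weq m n t u u' \<Longrightarrow> weq m n t v v' \<Longrightarrow> weq m n t (u @ v) (u' @ v')"
proof -
  assume a: "weq m n t u u'" and b: "weq m n t v v'"
  have "weq m n t ([] @ u @ v) ([] @ u' @ v)" by (rule weq_app[OF a])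
  moreover have "weq m n t (u' @ v @ []) (u' @ v' @ [])" by (rule weq_app[OF b])
  ultimately show ?thesis by (auto intro: weq.weq_trans)
qed

lemma cls_eq: "cls m n t u = cls m n t v \<longleftrightarrow> weq m n t u v"
proof
  assume "cls m n t u = cls m n t v"
  then have "v \<in> cls m n t u" by (auto intro: weq.weq_refl)
  then show "weq m n t u v" by simp
next
  assume "weq m n t u v"
  then show "cls m n t u = cls m n t v"
    by (auto intro: weq.weq_trans weq.weq_sym)
qed

lemma mult_cls: "cls m n t u \<otimes>\<^bsub>Gmnt m n t\<^esub> cls m n t v = cls m n t (u @ v)"
proof -
  have "\<And>w. (\<exists>x y. weq m n t u x \<and> weq m n t v y \<and> weq m n t w (x @ y)) \<longleftrightarrow> weq m n t (u @ v) w"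
  proof
    fix w assume "\<exists>x y. weq m n t u x \<and> weq m n t v y \<and> weq m n t w (x @ y)"
    then obtain x y where "weq m n t u x" "weq m n t v y" "weq m n t w (x @ y)" by blast
    then show "weq m n t (u @ v) w" by (meson weq.weq_sym weq.weq_trans weq_cong)
  next
    fix w assume "weq m n t (u @ v) w"
    then show "\<exists>x y. weq m n t u x \<and> weq m n t v y \<and> weq m n t w (x @ y)"
      by (meson weq.weq_refl weq.weq_sym)
  qed
  then show ?thesis unfolding Gmnt_def by simp
qed

lemma one_cls: "\<one>\<^bsub>Gmnt m n t\<^esub> = cls m n t []"
  by (simp add: Gmnt_def)

lemma carrier_G: "carrier (Gmnt m n t) = range (cls m n t)"
  by (simp add: Gmnt_def)

lemma winv_Cons: "winv ((g, i) # w) = winv w @ [(g, \<not> i)]"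
  by (simp add: winv_def)

lemma winv_cancel: "weq m n t (winv w @ w) []"
proof (induction w)
  case Nil then show ?case by (simp add: winv_def weq.weq_refl)
next
  case (Cons l w)
  obtain g i where l: "l = (g, i)" by (cases l)
  have "weq m n t (winv w @ [(g, \<not> i), (g, \<not> \<not> i)] @ w) (winv w @ w)"
    by (rule weq.weq_cancel)
  then have "weq m n t (winv (l # w) @ l # w) (winv w @ w)" by (simp add: l winv_Cons)
  then show ?case using Cons by (blast intro: weq.weq_trans)
qed

lemma group_G: "group (Gmnt m n t)"
proof (rule groupI)
  fix x y assume "x \<in> carrier (Gmnt m n t)" "y \<in> carrier (Gmnt m n t)"
  then show "x \<otimes>\<^bsub>Gmnt m n t\<^esub> y \<in> carrier (Gmnt m n t)"
    by (auto simp: carrier_G mult_cls)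
next
  show "\<one>\<^bsub>Gmnt m n t\<^esub> \<in> carrier (Gmnt m n t)" by (simp add: carrier_G one_cls)
next
  fix x y z assume "x \<in> carrier (Gmnt m n t)" "y \<in> carrier (Gmnt m n t)" "z \<in> carrier (Gmnt m n t)"
  then show "x \<otimes>\<^bsub>Gmnt m n t\<^esub> y \<otimes>\<^bsub>Gmnt m n t\<^esub> z = x \<otimes>\<^bsub>Gmnt m n t\<^esub> (y \<otimes>\<^bsub>Gmnt m n t\<^esub> z)"
    by (auto simp: carrier_G mult_cls)
next
  fix x assume "x \<in> carrier (Gmnt m n t)"
  then show "\<one>\<^bsub>Gmnt m n t\<^esub> \<otimes>\<^bsub>Gmnt m n t\<^esub> x = x"
    by (auto simp: carrier_G mult_cls one_cls)
next
  fix x assume "x \<in> carrier (Gmnt m n t)"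
  then obtain w where x: "x = cls m n t w" by (auto simp: carrier_G)
  show "\<exists>y\<in>carrier (Gmnt m n t). y \<otimes>\<^bsub>Gmnt m n t\<^esub> x = \<one>\<^bsub>Gmnt m n t\<^esub>"
    by (rule bexI[of _ "cls m n t (winv w)"])
       (auto simp: x mult_cls one_cls carrier_G cls_eq winv_cancel)
qed


section \<open>Actions\<close>

definition actw :: "(bool \<times> bool \<Rightarrow> 'x \<Rightarrow> 'x) \<Rightarrow> word \<Rightarrow> 'x \<Rightarrow> 'x" where
  "actw f w = foldr f w"

lemma actw_Nil[simp]: "actw f [] y = y" by (simp add: actw_def)
lemma actw_Cons[simp]: "actw f (l # w) y = f l (actw f w y)" by (simp add: actw_def)
lemma actw_append[simp]: "actw f (u @ v) y = actw f u (actw f v y)" by (simp add: actw_def)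
lemma actw_replicate: "actw f (replicate k l) y = (f l ^^ k) y"
  by (induction k) auto

lemma wpow_ltr: "wpow (ltr g) k = replicate k (g, False)"
  by (induction k) (auto simp: wpow_def ltr_def)

lemma winv_replicate: "winv (replicate k (g, False)) = replicate k (g, True)"
  by (simp add: winv_def)

definition good :: "nat \<Rightarrow> nat \<Rightarrow> nat \<Rightarrow> 'x set \<Rightarrow> (bool \<times> bool \<Rightarrow> 'x \<Rightarrow> 'x) \<Rightarrow> bool" where
  "good m n t Y f \<longleftrightarrow> (\<forall>l y. y \<in> Y \<longrightarrow> f l y \<in> Y) \<and>
     (\<forall>g i y. y \<in> Y \<longrightarrow> f (g, \<not> i) (f (g, i) y) = y) \<and>
     (\<forall>r\<in>relators m n t. \<forall>y\<in>Y. actw f r y = y)"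

lemma good_cl: "good m n t Y f \<Longrightarrow> \<forall>l y. y \<in> Y \<longrightarrow> f l y \<in> Y"
  unfolding good_def by (elim conjE)
lemma good_iv: "good m n t Y f \<Longrightarrow> \<forall>g i y. y \<in> Y \<longrightarrow> f (g, \<not> i) (f (g, i) y) = y"
  unfolding good_def by (elim conjE)
lemma good_rel: "good m n t Y f \<Longrightarrow> r \<in> relators m n t \<Longrightarrow> y \<in> Y \<Longrightarrow> actw f r y = y"
  unfolding good_def by (elim conjE) (drule (1) bspec, erule bspec)

lemma actw_closed: "\<forall>l y. y \<in> Y \<longrightarrow> f l y \<in> Y \<Longrightarrow> y \<in> Y \<Longrightarrow> actw f w y \<in> Y"
  by (induction w) auto

lemma actw_winv:
  assumes cl: "\<forall>l y. y \<in> Y \<longrightarrow> f l y \<in> Y" and iv: "\<forall>g i y. y \<in> Y \<longrightarrow> f (g, \<not> i) (f (g, i) y) = y"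
    and y: "y \<in> Y"
  shows "actw f (winv w) (actw f w y) = y"
proof (induction w)
  case Nil then show ?case by (simp add: winv_def)
next
  case (Cons l w)
  obtain g i where l: "l = (g, i)" by (cases l)
  have "actw f w y \<in> Y" using actw_closed[OF cl y] .
  then show ?case using Cons iv by (simp add: l winv_Cons)
qed

lemma relator_id:
  assumes cl: "\<forall>l y. y \<in> Y \<longrightarrow> f l y \<in> Y" and iv: "\<forall>g i y. y \<in> Y \<longrightarrow> f (g, \<not> i) (f (g, i) y) = y"
    and triv: "(\<forall>y\<in>Y. actw f A y = y) \<or> (\<forall>y\<in>Y. actw f B y = y)"
    and y: "y \<in> Y"
  shows "actw f (winv A @ winv B @ A @ B) y = y"
  using triv
proof
  assume h: "\<forall>y\<in>Y. actw f A y = y"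
  have h2: "\<forall>z\<in>Y. actw f (winv A) z = z"
    using actw_winv[OF cl iv, of _ A] h by metis
  have "actw f B y \<in> Y" by (rule actw_closed[OF cl y])
  moreover have "actw f (winv B) (actw f B y) \<in> Y"
    by (rule actw_closed[OF cl], rule actw_closed[OF cl y])
  ultimately show ?thesis using h h2 actw_winv[OF cl iv y, of B] by simp
next
  assume h: "\<forall>y\<in>Y. actw f B y = y"
  have h2: "\<forall>z\<in>Y. actw f (winv B) z = z"
    using actw_winv[OF cl iv, of _ B] h by metis
  have "actw f A y \<in> Y" by (rule actw_closed[OF cl y])
  then show ?thesis using h h2 y actw_winv[OF cl iv y, of A] by simp
qed

lemma weq_actw:
  assumes gd: "good m n t Y f"
  shows "weq m n t u v \<Longrightarrow> y \<in> Y \<Longrightarrow> actw f u y = actw f v y"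
proof (induction arbitrary: y rule: weq.induct)
  case (weq_refl u) show ?case by (rule refl)
next
  case (weq_sym u v) then show ?case by simp
next
  case (weq_trans u v w) then show ?case by simp
next
  case (weq_cancel u g i v)
  have z: "actw f v y \<in> Y" by (rule actw_closed[OF good_cl[OF gd] weq_cancel])
  have "f (g, \<not> \<not> i) (f (g, \<not> i) z) = z" if "z \<in> Y" for z
    using good_iv[OF gd] that by blast
  then have "f (g, i) (f (g, \<not> i) (actw f v y)) = actw f v y" using z by simp
  then show ?case by simp
next
  case (weq_rel r u v)
  have z: "actw f v y \<in> Y" by (rule actw_closed[OF good_cl[OF gd] weq_rel(2)])
  have "actw f r (actw f v y) = actw f v y" by (rule good_rel[OF gd weq_rel(1) z])
  then show ?case by simp
qed

definition ActG :: "nat \<Rightarrow> nat \<Rightarrow> nat \<Rightarrow> (bool \<times> bool \<Rightarrow> 'x \<Rightarrow> 'x) \<Rightarrow> word set \<Rightarrow> 'x \<Rightarrow> 'x" where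
  "ActG m n t f P y = actw f (SOME w. P = cls m n t w) y"

lemma ActG_cls:
  assumes gd: "good m n t Y f" and y: "y \<in> Y"
  shows "ActG m n t f (cls m n t w) y = actw f w y"
proof -
  have "\<exists>w'. cls m n t w = cls m n t w'" by (rule exI[of _ w]) (rule refl)
  then have "cls m n t w = cls m n t (SOME w'. cls m n t w = cls m n t w')" by (rule someI_ex)
  then have h: "weq m n t w (SOME w'. cls m n t w = cls m n t w')" by (simp only: cls_eq)
  have "actw f w y = actw f (SOME w'. cls m n t w = cls m n t w') y" by (rule weq_actw[OF gd h y])
  then show ?thesis unfolding ActG_def by (rule sym)
qed

lemma ActG_closed:
  assumes gd: "good m n t Y f" and y: "y \<in> Y" and P: "P \<in> carrier (Gmnt m n t)"
  shows "ActG m n t f P y \<in> Y"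
proof -
  obtain w where w: "P = cls m n t w" using P unfolding carrier_G by blast
  have cl: "\<forall>l y. y \<in> Y \<longrightarrow> f l y \<in> Y" by (rule good_cl[OF gd])
  show ?thesis unfolding w ActG_cls[OF gd y] by (rule actw_closed[OF cl y])
qed

lemma ActG_mult:
  assumes gd: "good m n t Y f" and y: "y \<in> Y" and P: "P \<in> carrier (Gmnt m n t)"
    and Q: "Q \<in> carrier (Gmnt m n t)"
  shows "ActG m n t f (P \<otimes>\<^bsub>Gmnt m n t\<^esub> Q) y = ActG m n t f P (ActG m n t f Q y)"
proof -
  obtain u where u: "P = cls m n t u" using P unfolding carrier_G by blast
  obtain v where v: "Q = cls m n t v" using Q unfolding carrier_G by blast
  have cl: "\<forall>l y. y \<in> Y \<longrightarrow> f l y \<in> Y" by (rule good_cl[OF gd])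
  have "actw f v y \<in> Y" by (rule actw_closed[OF cl y])
  then show ?thesis using ActG_cls[OF gd] y by (simp add: u v mult_cls)
qed

lemma ActG_one:
  assumes gd: "good m n t Y f" and y: "y \<in> Y"
  shows "ActG m n t f \<one>\<^bsub>Gmnt m n t\<^esub> y = y"
  using ActG_cls[OF gd y, of "[]"] by (simp add: one_cls)

lemma ActG_inv:
  assumes gd: "good m n t Y f" and y: "y \<in> Y" and P: "P \<in> carrier (Gmnt m n t)"
  shows "ActG m n t f (inv\<^bsub>Gmnt m n t\<^esub> P) (ActG m n t f P y) = y"
proof -
  interpret group "Gmnt m n t" by (rule group_G)
  show ?thesis using ActG_mult[OF gd y, of "inv\<^bsub>Gmnt m n t\<^esub> P" P] P ActG_one[OF gd y] by simp
qed

lemma ActG_pow: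
  assumes gd: "good m n t Y f" and y: "y \<in> Y" and P: "P \<in> carrier (Gmnt m n t)"
  shows "ActG m n t f (P [^]\<^bsub>Gmnt m n t\<^esub> (k::nat)) y = (ActG m n t f P ^^ k) y"
proof -
  interpret group "Gmnt m n t" by (rule group_G)
  show ?thesis using y
  proof (induction k arbitrary: y)
    case 0 then show ?case using ActG_one[OF gd] by simp
  next
    case (Suc k)
    have "ActG m n t f P y \<in> Y" by (rule ActG_closed[OF gd Suc.prems P])
    have e: "(ActG m n t f P ^^ Suc k) y = (ActG m n t f P ^^ k) (ActG m n t f P y)"
      by (simp only: funpow_Suc_right comp_def)
    have pk: "P [^]\<^bsub>Gmnt m n t\<^esub> k \<in> carrier (Gmnt m n t)" using P by simp
    have "ActG m n t f (P [^]\<^bsub>Gmnt m n t\<^esub> Suc k) y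
        = ActG m n t f (P [^]\<^bsub>Gmnt m n t\<^esub> k \<otimes>\<^bsub>Gmnt m n t\<^esub> P) y"
      by (simp only: nat_pow_Suc)
    also have "\<dots> = ActG m n t f (P [^]\<^bsub>Gmnt m n t\<^esub> k) (ActG m n t f P y)"
      by (rule ActG_mult[OF gd Suc.prems pk P])
    also have "\<dots> = (ActG m n t f P ^^ k) (ActG m n t f P y)"
      by (rule Suc.IH) fact
    finally show ?case using e by simp
  qed
qed


definition bnd :: "nat \<Rightarrow> nat \<Rightarrow> bool \<Rightarrow> nat" where "bnd p t g = (if g then t else p)"

fun valid :: "nat \<Rightarrow> nat \<Rightarrow> (bool \<times> nat) list \<Rightarrow> bool" where
  "valid p t [] = True"
| "valid p t ((g, k) # w) = (0 < k \<and> k < bnd p t g \<and> valid p t w \<and>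
      (case w of [] \<Rightarrow> True | (g', _) # _ \<Rightarrow> g' \<noteq> g))"

definition hdg :: "bool \<Rightarrow> (bool \<times> nat) list \<Rightarrow> nat" where
  "hdg g w = (case w of [] \<Rightarrow> 0 | (g', k) # _ \<Rightarrow> if g' = g then k else 0)"
definition tlg :: "bool \<Rightarrow> (bool \<times> nat) list \<Rightarrow> (bool \<times> nat) list" where
  "tlg g w = (case w of [] \<Rightarrow> [] | (g', k) # w' \<Rightarrow> if g' = g then w' else w)"
definition mk :: "bool \<Rightarrow> nat \<Rightarrow> (bool \<times> nat) list \<Rightarrow> (bool \<times> nat) list" where
  "mk g k w = (if k = 0 then w else (g, k) # w)"

lemma hdg_lt: "valid p t w \<Longrightarrow> 0 < bnd p t g \<Longrightarrow> hdg g w < bnd p t g"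
  by (cases w) (auto simp: hdg_def)

lemma tlg_valid: "valid p t w \<Longrightarrow> valid p t (tlg g w)"
  by (cases w) (auto simp: tlg_def)

lemma tlg_tlg: "valid p t w \<Longrightarrow> hdg g (tlg g w) = 0 \<and> tlg g (tlg g w) = tlg g w"
proof (cases w)
  case Nil then show ?thesis by (simp add: hdg_def tlg_def)
next
  case (Cons a w')
  obtain g' k where a: "a = (g', k)" by (cases a)
  assume v: "valid p t w"
  show ?thesis
  proof (cases "g' = g")
    case True
    then show ?thesis using v Cons a by (cases w') (auto simp: hdg_def tlg_def)
  next
    case False
    then show ?thesis using v Cons a by (auto simp: hdg_def tlg_def)
  qed
qed

lemma mk_props:
  assumes v: "valid p t w" and h: "hdg g w = 0" and k: "k < bnd p t g"
  shows "valid p t (mk g k w) \<and> hdg g (mk g k w) = k \<and> tlg g (mk g k w) = w"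
proof (cases w)
  case Nil then show ?thesis using k by (auto simp: hdg_def tlg_def mk_def)
next
  case (Cons a w')
  obtain g' k' where a: "a = (g', k')" by (cases a)
  have "g' \<noteq> g"
  proof
    assume e: "g' = g"
    have "hdg g w = k'" using Cons a e by (simp add: hdg_def)
    moreover have "0 < k'" using v Cons a by simp
    ultimately show False using h by simp
  qed
  then show ?thesis using v k Cons a by (auto simp: hdg_def tlg_def mk_def)
qed

lemma mk_hd_tl: "valid p t w \<Longrightarrow> mk g (hdg g w) (tlg g w) = w"
proof (cases w)
  case Nil then show ?thesis by (simp add: hdg_def tlg_def mk_def)
next
  case (Cons a w')
  obtain g' k where a: "a = (g', k)" by (cases a)
  assume v: "valid p t w"
  show ?thesis
  proof (cases "g' = g")
    case True
    then show ?thesis using v Cons a by (simp add: hdg_def tlg_def mk_def)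
  next
    case False
    then show ?thesis using v Cons a by (simp add: hdg_def tlg_def mk_def)
  qed
qed

definition Apow :: "nat \<Rightarrow> nat \<Rightarrow> (bool \<times> nat) list \<Rightarrow> (bool \<times> nat) list" where
  "Apow p k w = mk False ((hdg False w + k) mod p) (tlg False w)"

definition Dpow :: "nat \<Rightarrow> nat \<Rightarrow> (bool \<times> nat) list \<Rightarrow> (bool \<times> nat) list" where
  "Dpow t k w = (if tlg True w = [] then w else mk True ((hdg True w + k) mod t) (tlg True w))"

lemma bnd_F[simp]: "bnd p t False = p" and bnd_T[simp]: "bnd p t True = t"
  by (simp_all add: bnd_def)

lemma Apow_props:
  assumes v: "valid p t w" and p: "0 < p"
  shows "valid p t (Apow p k w) \<and> hdg False (Apow p k w) = (hdg False w + k) mod p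
         \<and> tlg False (Apow p k w) = tlg False w"
proof -
  have "valid p t (tlg False w)" by (rule tlg_valid[OF v])
  moreover have "hdg False (tlg False w) = 0" using tlg_tlg[OF v] by blast
  moreover have "(hdg False w + k) mod p < bnd p t False" using p by simp
  ultimately show ?thesis unfolding Apow_def using mk_props by blast
qed

lemma Apow_Apow:
  assumes v: "valid p t w" and p: "0 < p"
  shows "Apow p i (Apow p j w) = Apow p (i + j) w"
proof -
  have "(((hdg False w + j) mod p) + i) mod p = (hdg False w + j + i) mod p"
    by (rule mod_add_left_eq)
  also have "\<dots> = (hdg False w + (i + j)) mod p" by (simp add: ac_simps)
  finally have "(((hdg False w + j) mod p) + i) mod p = (hdg False w + (i + j)) mod p" .
  then show ?thesis using Apow_props[OF v p, of j] by (simp add: Apow_def[of p i] Apow_def[of p "i + j"])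
qed

lemma Apow_dvd:
  assumes v: "valid p t w" and p: "0 < p" and d: "p dvd k"
  shows "Apow p k w = w"
proof -
  have "hdg False w < p" using hdg_lt[OF v, of False] p by simp
  moreover obtain c where "k = p * c" using d by (rule dvdE)
  ultimately have "(hdg False w + k) mod p = hdg False w" by simp
  then show ?thesis unfolding Apow_def using mk_hd_tl[OF v] by simp
qed

lemma Dpow_props:
  assumes v: "valid p t w" and tp: "0 < t" and ne: "tlg True w \<noteq> []"
  shows "valid p t (Dpow t k w) \<and> hdg True (Dpow t k w) = (hdg True w + k) mod t
         \<and> tlg True (Dpow t k w) = tlg True w"
proof -
  have "valid p t (tlg True w)" by (rule tlg_valid[OF v])
  moreover have "hdg True (tlg True w) = 0" using tlg_tlg[OF v] by blast
  moreover have "(hdg True w + k) mod t < bnd p t True" using tp by simp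
  ultimately show ?thesis unfolding Dpow_def using mk_props ne by auto
qed

lemma Dpow_triv: "tlg True w = [] \<Longrightarrow> Dpow t k w = w"
  by (simp add: Dpow_def)

lemma Dpow_valid: "valid p t w \<Longrightarrow> 0 < t \<Longrightarrow> valid p t (Dpow t k w)"
  using Dpow_props Dpow_triv by metis

lemma Dpow_tl: "valid p t w \<Longrightarrow> 0 < t \<Longrightarrow> tlg True (Dpow t k w) = tlg True w"
  using Dpow_props Dpow_triv by metis

lemma Dpow_Dpow:
  assumes v: "valid p t w" and tp: "0 < t"
  shows "Dpow t i (Dpow t j w) = Dpow t (i + j) w"
proof (cases "tlg True w = []")
  case True then show ?thesis by (simp add: Dpow_triv)
next
  case False
  have "(((hdg True w + j) mod t) + i) mod t = (hdg True w + j + i) mod t"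
    by (rule mod_add_left_eq)
  also have "\<dots> = (hdg True w + (i + j)) mod t" by (simp add: ac_simps)
  finally have "(((hdg True w + j) mod t) + i) mod t = (hdg True w + (i + j)) mod t" .
  then show ?thesis using Dpow_props[OF v tp False, of j] False by (simp add: Dpow_def[of t i] Dpow_def[of t "i + j"])
qed

lemma Dpow_dvd:
  assumes v: "valid p t w" and tp: "0 < t" and d: "t dvd k"
  shows "Dpow t k w = w"
proof (cases "tlg True w = []")
  case True then show ?thesis by (simp add: Dpow_triv)
next
  case False
  have "hdg True w < t" using hdg_lt[OF v, of True] tp by simp
  moreover obtain c where "k = t * c" using d by (rule dvdE)
  ultimately have "(hdg True w + k) mod t = hdg True w" by simp
  then show ?thesis unfolding Dpow_def using mk_hd_tl[OF v] False by simp
qed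

lemma Dpow_inj:
  assumes v: "valid p t w" and tp: "0 < t" and ne: "tlg True w \<noteq> []"
    and e: "Dpow t i w = Dpow t j w"
  shows "i mod t = j mod t"
proof -
  have "(hdg True w + i) mod t = (hdg True w + j) mod t"
    using Dpow_props[OF v tp ne, of i] Dpow_props[OF v tp ne, of j] e by simp
  then have "[hdg True w + i = hdg True w + j] (mod t)" by (simp add: cong_def)
  then have "[i = j] (mod t)" by (simp add: cong_add_lcancel_nat)
  then show ?thesis by (simp add: cong_def)
qed


definition bst :: "nat \<Rightarrow> nat \<Rightarrow> (bool \<times> nat) list \<times> nat \<Rightarrow> (bool \<times> nat) list \<times> nat" where
  "bst q t y = (if Suc (snd y) < q then (fst y, Suc (snd y)) else (Dpow t 1 (fst y), 0))"
definition bin :: "nat \<Rightarrow> nat \<Rightarrow> (bool \<times> nat) list \<times> nat \<Rightarrow> (bool \<times> nat) list \<times> nat" where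
  "bin q t y = (if 0 < snd y then (fst y, snd y - 1) else (Dpow t (t - 1) (fst y), q - 1))"

definition fW :: "bool \<Rightarrow> nat \<Rightarrow> nat \<Rightarrow> nat \<Rightarrow> bool \<times> bool \<Rightarrow> (bool \<times> nat) list \<times> nat \<Rightarrow> (bool \<times> nat) list \<times> nat" where
  "fW gP p q t l y = (if fst l = gP then (Apow p (if snd l then p - 1 else 1) (fst y), snd y)
                      else if snd l then bin q t y else bst q t y)"

definition YW :: "nat \<Rightarrow> nat \<Rightarrow> nat \<Rightarrow> ((bool \<times> nat) list \<times> nat) set" where
  "YW p q t = {y. valid p t (fst y) \<and> snd y < q}"

lemma fW_prim: "fW gP p q t (gP, i) y = (Apow p (if i then p - 1 else 1) (fst y), snd y)"
  by (simp add: fW_def)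
lemma fW_sec: "g \<noteq> gP \<Longrightarrow> fW gP p q t (g, i) y = (if i then bin q t y else bst q t y)"
  by (simp add: fW_def)

lemma fW_closed:
  assumes p: "0 < p" and q: "0 < q" and tp: "0 < t" and y: "y \<in> YW p q t"
  shows "fW gP p q t l y \<in> YW p q t"
proof -
  have v: "valid p t (fst y)" and r: "snd y < q" using y by (auto simp: YW_def)
  show ?thesis
    using Apow_props[OF v p] Dpow_valid[OF v tp] r q v
    by (auto simp: fW_def bst_def bin_def YW_def)
qed

lemma fW_inv:
  assumes p: "0 < p" and q: "0 < q" and tp: "0 < t" and y: "y \<in> YW p q t"
  shows "fW gP p q t (g, \<not> i) (fW gP p q t (g, i) y) = y"
proof -
  obtain w r where yw: "y = (w, r)" by (cases y)
  have v: "valid p t w" and r: "r < q" using y yw by (auto simp: YW_def)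
  show ?thesis
  proof (cases "g = gP")
    case True
    have "Apow p (if \<not> i then p - 1 else 1) (Apow p (if i then p - 1 else 1) w)
          = Apow p p w" using Apow_Apow[OF v p] p by auto
    also have "\<dots> = w" by (rule Apow_dvd[OF v p]) simp
    finally show ?thesis using True yw by (simp add: fW_prim)
  next
    case False
    have e1: "Dpow t (t - 1) (Dpow t 1 w) = w" and e2: "Dpow t 1 (Dpow t (t - 1) w) = w"
      using Dpow_Dpow[OF v tp] Dpow_dvd[OF v tp] tp by auto
    show ?thesis using False yw r q e1 e2
      by (cases i) (auto simp: fW_sec bst_def bin_def)
  qed
qed

lemma bst_pow:
  assumes q: "0 < q" and tp: "0 < t" and v: "valid p t w" and r: "r < q"
  shows "(bst q t ^^ k) (w, r) = (Dpow t ((r + k) div q) w, (r + k) mod q)"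
proof (induction k)
  case 0 then show ?case using r Dpow_dvd[OF v tp, of 0] by simp
next
  case (Suc k)
  have vv: "valid p t (Dpow t ((r + k) div q) w)" by (rule Dpow_valid[OF v tp])
  have "(bst q t ^^ Suc k) (w, r) = bst q t (Dpow t ((r + k) div q) w, (r + k) mod q)"
    using Suc by simp
  also have "\<dots> = (Dpow t ((r + Suc k) div q) w, (r + Suc k) mod q)"
  proof (cases "Suc ((r + k) mod q) < q")
    case True
    then have "Suc (r + k) mod q = Suc ((r + k) mod q)" by (simp add: mod_Suc)
    moreover have "Suc (r + k) div q = (r + k) div q" using True
      by (simp add: div_Suc mod_Suc)
    ultimately show ?thesis using True by (simp add: bst_def)
  next
    case False
    then have eq: "Suc ((r + k) mod q) = q" using q by (meson Suc_lessI mod_less_divisor)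
    then have "Suc (r + k) mod q = 0" by (simp add: mod_Suc)
    moreover have "Suc (r + k) div q = Suc ((r + k) div q)" using eq
      by (simp add: div_Suc mod_Suc)
    moreover have "Dpow t 1 (Dpow t ((r + k) div q) w) = Dpow t (Suc ((r + k) div q)) w"
      using Dpow_Dpow[OF v tp] by simp
    ultimately show ?thesis using False by (simp add: bst_def)
  qed
  finally show ?case .
qed

lemma prim_pow:
  "(fW gP p q t (gP, False) ^^ k) (w, r) = (Apow p k w, r)" if p: "0 < p" and v: "valid p t w"
proof (induction k)
  case 0 then show ?case using Apow_dvd[OF v p, of 0] by simp
next
  case (Suc k)
  then show ?case using Apow_Apow[OF v p, of 1 k] by (simp add: fW_prim)
qed

lemma sec_pow:
  "(fW gP p q t (g, False) ^^ k) (w, r) = (Dpow t ((r + k) div q) w, (r + k) mod q)"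
  if g: "g \<noteq> gP" and q: "0 < q" and tp: "0 < t" and v: "valid p t w" and r: "r < q"
proof -
  have "fW gP p q t (g, False) = bst q t" by (rule ext) (simp add: fW_sec g)
  then show ?thesis using bst_pow[OF q tp v r] by simp
qed


lemma actw_wpow: "actw f (wpow (ltr g) k) y = (f (g, False) ^^ k) y"
  by (simp add: wpow_ltr actw_replicate)

lemma goodW_F:
  assumes m: "1 < m" and n: "1 < n" and tp: "0 < t"
  shows "good m n t (YW m n t) (fW False m n t)"
proof -
  let ?f = "fW False m n t" and ?Y = "YW m n t"
  have cl: "\<forall>l y. y \<in> ?Y \<longrightarrow> ?f l y \<in> ?Y" using fW_closed m n tp by auto
  have iv: "\<forall>g i y. y \<in> ?Y \<longrightarrow> ?f (g, \<not> i) (?f (g, i) y) = y" using fW_inv m n tp by auto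
  have A: "actw ?f (wpow (ltr False) (m * k)) y = y" if y: "y \<in> ?Y" for y k
  proof -
    obtain w r where yw: "y = (w, r)" by (cases y)
    have v: "valid m t w" using y yw by (simp add: YW_def)
    show ?thesis using prim_pow[where gP=False and p=m and q=n and t=t and w=w and r=r and k="m * k"] v m Apow_dvd[OF v, of "m * k"] yw
      by (simp add: actw_wpow)
  qed
  have B: "actw ?f (wpow (ltr True) (n * t)) y = y" if y: "y \<in> ?Y" for y
  proof -
    obtain w r where yw: "y = (w, r)" by (cases y)
    have v: "valid m t w" and r: "r < n" using y yw by (auto simp: YW_def)
    have "(r + n * t) div n = t" using r by simp
    moreover have "(r + n * t) mod n = r" using r by simp
    ultimately show ?thesis using sec_pow[where g=True and gP=False and q=n and t=t and p=m and w=w and r=r and k="n * t"] v r n tp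
       Dpow_dvd[OF v tp, of t] yw by (simp add: actw_wpow)
  qed
  have R: "\<forall>r\<in>relators m n t. \<forall>y\<in>?Y. actw ?f r y = y"
  proof (intro ballI)
    fix r y assume r: "r \<in> relators m n t" and y: "y \<in> ?Y"
    have A1: "\<forall>y\<in>?Y. actw ?f (wpow (ltr False) m) y = y" using A[of _ 1] by simp
    show "actw ?f r y = y"
      using r relator_id[OF cl iv _ y, of "wpow (ltr False) m" "wpow (ltr True) n"] A1
        A[OF y, of t] B[OF y]
      unfolding relators_def by auto
  qed
  show ?thesis unfolding good_def using cl iv R by blast
qed

lemma goodW_T:
  assumes m: "1 < m" and n: "1 < n" and tp: "0 < t"
  shows "good m n t (YW n m t) (fW True n m t)"
proof -
  let ?f = "fW True n m t" and ?Y = "YW n m t"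
  have cl: "\<forall>l y. y \<in> ?Y \<longrightarrow> ?f l y \<in> ?Y" using fW_closed m n tp by auto
  have iv: "\<forall>g i y. y \<in> ?Y \<longrightarrow> ?f (g, \<not> i) (?f (g, i) y) = y" using fW_inv m n tp by auto
  have A: "actw ?f (wpow (ltr True) (n * k)) y = y" if y: "y \<in> ?Y" for y k
  proof -
    obtain w r where yw: "y = (w, r)" by (cases y)
    have v: "valid n t w" using y yw by (simp add: YW_def)
    show ?thesis using prim_pow[where gP=True and p=n and q=m and t=t and w=w and r=r and k="n * k"] v n Apow_dvd[OF v, of "n * k"] yw
      by (simp add: actw_wpow)
  qed
  have B: "actw ?f (wpow (ltr False) (m * t)) y = y" if y: "y \<in> ?Y" for y
  proof -
    obtain w r where yw: "y = (w, r)" by (cases y)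
    have v: "valid n t w" and r: "r < m" using y yw by (auto simp: YW_def)
    have "(r + m * t) div m = t" using r by simp
    moreover have "(r + m * t) mod m = r" using r by simp
    ultimately show ?thesis using sec_pow[where g=False and gP=True and q=m and t=t and p=n and w=w and r=r and k="m * t"] v r m tp
       Dpow_dvd[OF v tp, of t] yw by (simp add: actw_wpow)
  qed
  have R: "\<forall>r\<in>relators m n t. \<forall>y\<in>?Y. actw ?f r y = y"
  proof (intro ballI)
    fix r y assume r: "r \<in> relators m n t" and y: "y \<in> ?Y"
    have A1: "\<forall>y\<in>?Y. actw ?f (wpow (ltr True) n) y = y" using A[of _ 1] by simp
    show "actw ?f r y = y"
      using r relator_id[OF cl iv _ y, of "wpow (ltr False) m" "wpow (ltr True) n"] A1
        A[OF y, of t] B[OF y]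
      unfolding relators_def by auto
  qed
  show ?thesis unfolding good_def using cl iv R by blast
qed

definition fE :: "bool \<Rightarrow> nat \<Rightarrow> bool \<times> bool \<Rightarrow> nat \<Rightarrow> nat" where
  "fE gE N l r = (if fst l = gE then (if snd l then (r + (N - 1)) mod N else (r + 1) mod N) else r)"

lemma fE_pow: "r < N \<Longrightarrow> (fE gE N (g, False) ^^ k) r = (if g = gE then (r + k) mod N else r)"
proof (induction k)
  case 0 then show ?case by simp
next
  case (Suc k)
  have "(fE gE N (g, False) ^^ Suc k) r = fE gE N (g, False) ((fE gE N (g, False) ^^ k) r)" by simp
  also have "\<dots> = fE gE N (g, False) (if g = gE then (r + k) mod N else r)" using Suc by simp
  also have "\<dots> = (if g = gE then (r + Suc k) mod N else r)"
  proof (cases "g = gE")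
    case True
    have "((r + k) mod N + 1) mod N = (r + k + 1) mod N" by (rule mod_add_left_eq)
    then show ?thesis using True by (simp add: fE_def)
  next
    case False then show ?thesis by (simp add: fE_def)
  qed
  finally show ?case .
qed

lemma fE_inv: "0 < N \<Longrightarrow> r < N \<Longrightarrow> fE gE N (g, \<not> i) (fE gE N (g, i) r) = r"
proof -
  assume N: "0 < N" and r: "r < N"
  have "((r + 1) mod N + (N - 1)) mod N = (r + 1 + (N - 1)) mod N" by (rule mod_add_left_eq)
  also have "\<dots> = (r + N) mod N" using N by simp
  also have "\<dots> = r" using r by simp
  finally have e1: "((r + 1) mod N + (N - 1)) mod N = r" .
  have "((r + (N - 1)) mod N + 1) mod N = (r + (N - 1) + 1) mod N" by (rule mod_add_left_eq)
  also have "\<dots> = (r + N) mod N" using N by simp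
  also have "\<dots> = r" using r by simp
  finally have e2: "((r + (N - 1)) mod N + 1) mod N = r" .
  show ?thesis using e1 e2 by (cases i) (auto simp: fE_def)
qed

lemma goodE:
  assumes m: "1 < m" and n: "1 < n" and tp: "0 < t"
    and N: "N = (if gE then n else m) * t"
  shows "good m n t {..<N} (fE gE N)"
proof -
  have N0: "0 < N" using N m n tp by simp
  let ?f = "fE gE N" and ?Y = "{..<N}"
  have cl: "\<forall>l y. y \<in> ?Y \<longrightarrow> ?f l y \<in> ?Y" using N0 by (auto simp: fE_def)
  have iv: "\<forall>g i y. y \<in> ?Y \<longrightarrow> ?f (g, \<not> i) (?f (g, i) y) = y" using fE_inv N0 by auto
  have P: "actw ?f (wpow (ltr g) k) y = (if g = gE then (y + k) mod N else y)" if "y \<in> ?Y" for g k y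
    using fE_pow that by (simp add: actw_wpow)
  have R: "\<forall>r\<in>relators m n t. \<forall>y\<in>?Y. actw ?f r y = y"
  proof (intro ballI)
    fix r y assume r: "r \<in> relators m n t" and y: "y \<in> ?Y"
    have triv: "(\<forall>y\<in>?Y. actw ?f (wpow (ltr False) m) y = y) \<or> (\<forall>y\<in>?Y. actw ?f (wpow (ltr True) n) y = y)"
      using P by (cases gE) auto
    have "actw ?f (wpow (ltr False) (m * t)) y = y" using P[OF y] y N by (cases gE) auto
    moreover have "actw ?f (wpow (ltr True) (n * t)) y = y" using P[OF y] y N by (cases gE) auto
    ultimately show "actw ?f r y = y"
      using r relator_id[OF cl iv triv y] unfolding relators_def by auto
  qed
  show ?thesis unfolding good_def using cl iv R by blast
qed

lemma fE_transl:
  assumes N: "0 < N"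
  shows "r < N \<Longrightarrow> actw (fE gE N) w r = (r + actw (fE gE N) w 0) mod N"
proof (induction w)
  case Nil then show ?case by simp
next
  case (Cons l w)
  obtain g i where l: "l = (g, i)" by (cases l)
  have IH: "actw (fE gE N) w r = (r + actw (fE gE N) w 0) mod N" using Cons by simp
  have s: "actw (fE gE N) w 0 < N"
    using actw_closed[of "{..<N}" "fE gE N" 0 w] N by (auto simp: fE_def)
  define s0 where "s0 = actw (fE gE N) w 0"
  have key: "((r + s0) mod N + x) mod N = (r + (s0 + x) mod N) mod N" for x
  proof -
    have "((r + s0) mod N + x) mod N = (r + s0 + x) mod N" by (rule mod_add_left_eq)
    moreover have "(r + (s0 + x) mod N) mod N = (r + (s0 + x)) mod N" by (rule mod_add_right_eq)
    ultimately show ?thesis by (simp add: add.assoc)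
  qed
  have s0: "s0 < N" using s s0_def by simp
  have e1: "actw (fE gE N) (l # w) r = fE gE N (g, i) ((r + s0) mod N)" using IH by (simp add: l s0_def)
  have e2: "actw (fE gE N) (l # w) 0 = fE gE N (g, i) s0" by (simp add: l s0_def)
  have e3: "fE gE N (g, i) ((r + s0) mod N) = (r + fE gE N (g, i) s0) mod N"
  proof (cases "g = gE")
    case True
    then show ?thesis using key[of 1] key[of "N - 1"] s0 by (cases i) (simp_all only: fE_def fst_conv snd_conv if_True if_False mod_mod_trivial, simp_all)
  next
    case False then show ?thesis using s0 by (simp add: fE_def)
  qed
  show ?case using e1 e2 e3 by simp
qed


context group
begin

definition prodl :: "'a list \<Rightarrow> 'a" where
  "prodl l = foldr (\<lambda>x acc. x \<otimes> acc) l \<one>"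

lemma prodl_Nil[simp]: "prodl [] = \<one>" and prodl_Cons[simp]: "prodl (x # l) = x \<otimes> prodl l"
  by (simp_all add: prodl_def)

lemma prodl_closed: "set l \<subseteq> carrier G \<Longrightarrow> prodl l \<in> carrier G"
  by (induction l) auto

lemma prodl_append: "set l1 \<subseteq> carrier G \<Longrightarrow> set l2 \<subseteq> carrier G \<Longrightarrow> prodl (l1 @ l2) = prodl l1 \<otimes> prodl l2"
  by (induction l1) (auto simp: m_assoc prodl_closed)

lemma prodl_replicate: "x \<in> carrier G \<Longrightarrow> prodl (replicate k x) = x [^] k"
proof (induction k)
  case 0 then show ?case by simp
next
  case (Suc k) then show ?case using nat_pow_Suc2[of x k] by simp
qed

definition repw :: "'a \<Rightarrow> 'a \<Rightarrow> (bool \<times> nat) list \<Rightarrow> 'a" where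
  "repw P Q w = foldr (\<lambda>s acc. (if fst s then Q else P) [^] (snd s) \<otimes> acc) w \<one>"

lemma repw_Nil[simp]: "repw P Q [] = \<one>"
  and repw_Cons[simp]: "repw P Q ((g, k) # w) = (if g then Q else P) [^] k \<otimes> repw P Q w"
  by (simp_all add: repw_def)

lemma repw_closed: "P \<in> carrier G \<Longrightarrow> Q \<in> carrier G \<Longrightarrow> repw P Q w \<in> carrier G"
  by (induction w) (auto simp: repw_def)

lemma repw_mk: "P \<in> carrier G \<Longrightarrow> Q \<in> carrier G \<Longrightarrow>
    repw P Q (mk g k w) = (if g then Q else P) [^] k \<otimes> repw P Q w"
  by (auto simp: mk_def repw_closed)

lemma repw_hd_tl: "P \<in> carrier G \<Longrightarrow> Q \<in> carrier G \<Longrightarrow> valid p t w \<Longrightarrow>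
    repw P Q w = (if g then Q else P) [^] hdg g w \<otimes> repw P Q (tlg g w)"
  using repw_mk[of P Q g "hdg g w" "tlg g w"] mk_hd_tl[of p t w g] by simp

lemma comm_repw:
  assumes P: "P \<in> carrier G" and Q: "Q \<in> carrier G" and Z: "Z \<in> carrier G"
    and ZP: "Z \<otimes> P = P \<otimes> Z" and ZQ: "Z \<otimes> Q = Q \<otimes> Z"
  shows "Z \<otimes> repw P Q w = repw P Q w \<otimes> Z"
proof -
  have pw: "Z \<otimes> U [^] (k::nat) = U [^] k \<otimes> Z" if U: "U \<in> carrier G" and ZX: "Z \<otimes> U = U \<otimes> Z" for U k
  proof (induction k)
    case 0 then show ?case using Z by simp
  next
    case (Suc k)
    have "Z \<otimes> U [^] Suc k = (Z \<otimes> U [^] k) \<otimes> U" using U Z by (simp add: m_assoc)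
    also have "\<dots> = U [^] k \<otimes> (Z \<otimes> U)" using Suc U Z by (simp add: m_assoc)
    also have "\<dots> = U [^] Suc k \<otimes> Z" using ZX U Z by (simp add: m_assoc)
    finally show ?case .
  qed
  show ?thesis
  proof (induction w)
    case Nil then show ?case using Z by simp
  next
    case (Cons s w)
    obtain g k where s: "s = (g, k)" by (cases s)
    let ?X = "if g then Q else P"
    have U: "?X \<in> carrier G" using P Q by simp
    have ZX: "Z \<otimes> ?X = ?X \<otimes> Z" using ZP ZQ by simp
    have R: "repw P Q w \<in> carrier G" by (rule repw_closed[OF P Q])
    have "Z \<otimes> repw P Q (s # w) = (Z \<otimes> ?X [^] k) \<otimes> repw P Q w"
      using U Z R by (simp add: s m_assoc)
    also have "\<dots> = ?X [^] k \<otimes> (Z \<otimes> repw P Q w)" using pw[OF U ZX] U Z R by (simp add: m_assoc)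
    also have "\<dots> = repw P Q (s # w) \<otimes> Z" using Cons U Z R by (simp add: s m_assoc)
    finally show ?case .
  qed
qed

lemma pow_split:
  assumes P: "P \<in> carrier G" and p: "0 < p"
  shows "P [^] (a::nat) = P [^] (a mod p) \<otimes> (P [^] p) [^] (a div p)"
proof -
  have "a = a mod p + p * (a div p)" by simp
  then have "P [^] a = P [^] (a mod p + p * (a div p))" by simp
  also have "\<dots> = P [^] (a mod p) \<otimes> P [^] (p * (a div p))"
    using nat_pow_mult[OF P, of "a mod p" "p * (a div p)"] by simp
  also have "\<dots> = P [^] (a mod p) \<otimes> (P [^] p) [^] (a div p)"
    using nat_pow_pow[OF P, of p "a div p"] by simp
  finally show ?thesis .
qed

lemma sub_pow: "subgroup H G \<Longrightarrow> x \<in> H \<Longrightarrow> x [^] (k::nat) \<in> H"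
proof (induction k)
  case 0 then show ?case by (simp add: subgroup.one_closed)
next
  case (Suc k)
  then show ?case using subgroup.m_closed[of H G] by simp
qed

lemma rep_main:
  assumes P: "P \<in> carrier G" and Q: "Q \<in> carrier G" and p: "0 < p" and tp: "0 < t"
    and Zd: "Z = P [^] p" and Qt: "Q [^] t = \<one>" and Ppt: "P [^] (p * t) = \<one>"
    and ZQ: "Z \<otimes> Q = Q \<otimes> Z"
    and actM: "\<And>x y s. x \<in> carrier G \<Longrightarrow> y \<in> carrier G \<Longrightarrow> s \<in> S \<Longrightarrow> act (x \<otimes> y) s = act x (act y s)"
    and act1: "\<And>s. s \<in> S \<Longrightarrow> act \<one> s = s"
    and actP: "\<And>w. valid p t w \<Longrightarrow> act P (w, 0) = (Apow p 1 w, 0)"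
    and actQ: "\<And>w. valid p t w \<Longrightarrow> act Q (w, 0) = (Dpow t 1 w, 0)"
    and S: "\<And>w. valid p t w \<Longrightarrow> (w, 0) \<in> S"
    and y: "y \<in> generate G (insert P (generate G {Z, Q}))"
  shows "\<exists>w h. valid p t w \<and> h \<in> generate G {Z, Q} \<and> y = repw P Q w \<otimes> h \<and> act y ([], 0) = (w, 0)"
proof -
  let ?H = "generate G {Z, Q}"
  have Z: "Z \<in> carrier G" using Zd P by simp
  have HS: "subgroup ?H G" by (rule generate_is_subgroup) (use Z Q in auto)
  have ZH: "Z \<in> ?H" and QH: "Q \<in> ?H" by (auto intro: generate.incl)
  have ZP: "Z \<otimes> P = P \<otimes> Z" using Zd P nat_pow_Suc2[OF P, of p] by simp
  define M where "M = {prodl l | l. set l \<subseteq> {P, Q}}"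
  have Mc: "M \<subseteq> carrier G" using P Q by (auto simp: M_def intro!: prodl_closed)
  have Mm: "a \<otimes> b \<in> M" if ha: "a \<in> M" and hb: "b \<in> M" for a b
  proof -
    obtain l1 where "a = prodl l1" "set l1 \<subseteq> {P, Q}" using ha unfolding M_def by blast
    moreover obtain l2 where "b = prodl l2" "set l2 \<subseteq> {P, Q}" using hb unfolding M_def by blast
    moreover have "set l1 \<subseteq> carrier G" "set l2 \<subseteq> carrier G" using calculation P Q by auto
    ultimately have "a \<otimes> b = prodl (l1 @ l2)" "set (l1 @ l2) \<subseteq> {P, Q}"
      using prodl_append[of l1 l2] by auto
    then show ?thesis unfolding M_def by blast
  qed
  have Mpow: "U [^] (k::nat) \<in> M" if "U \<in> {P, Q}" for U k
    using that P Q prodl_replicate[of U k] unfolding M_def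
    by (intro CollectI exI[of _ "replicate k U"]) auto
  have Minv1: "inv U \<in> M" if U: "U \<in> {P, Q}" for U
  proof -
    obtain e where e: "U [^] Suc e = \<one>" and "0 < Suc e"
    proof (cases "U = P")
      case True
      have "Suc (p * t - 1) = p * t" using p tp by simp
      then have "U [^] Suc (p * t - 1) = \<one>" using Ppt True by simp
      then show ?thesis using that[of "p * t - 1"] by simp
    next
      case False
      then have "U = Q" using U by simp
      have "Suc (t - 1) = t" using tp by simp
      then have "U [^] Suc (t - 1) = \<one>" using Qt \<open>U = Q\<close> by simp
      then show ?thesis using that[of "t - 1"] by simp
    qed
    have Xc: "U \<in> carrier G" using U P Q by auto
    have "U [^] e \<otimes> U = \<one>" using e Xc by simp
    then have "inv U = U [^] e" using Xc by (intro inv_equality) auto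
    then show ?thesis using Mpow[OF U] by simp
  qed
  have Minv: "inv a \<in> M" if ha: "a \<in> M" for a
  proof -
    obtain l where l: "a = prodl l" "set l \<subseteq> {P, Q}" using ha unfolding M_def by blast
    have "inv (prodl l) \<in> M" using l(2)
    proof (induction l)
      case Nil then show ?case unfolding M_def by (auto intro!: exI[of _ "[]"])
    next
      case (Cons x l)
      have xc: "x \<in> carrier G" and lc: "prodl l \<in> carrier G" using Cons.prems P Q
        by (auto intro!: prodl_closed)
      have "inv (prodl (x # l)) = inv (prodl l) \<otimes> inv x" using xc lc by (simp add: inv_mult_group)
      then show ?case using Mm Cons Minv1 by simp
    qed
    then show ?thesis using l by simp
  qed
  have MS: "subgroup M G"
    by (rule subgroupI[OF Mc]) (use Mm Minv Mpow[of P 0] in \<open>auto\<close>)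
  have PM: "P \<in> M" using Mpow[of P 1] P by simp
  have HM: "?H \<subseteq> M" by (rule generate_subgroup_incl[OF _ MS]) (use Mpow[of P p] Zd Mpow[of Q 1] Q in auto)
  have yM: "y \<in> M" using generate_subgroup_incl[OF _ MS, of "insert P ?H"] PM HM y by auto
  then obtain l where l: "y = prodl l" "set l \<subseteq> {P, Q}" unfolding M_def by blast
  have "\<exists>w h. valid p t w \<and> h \<in> ?H \<and> prodl l = repw P Q w \<otimes> h \<and> act (prodl l) ([], 0) = (w, 0)"
    using l(2)
  proof (induction l)
    case Nil
    have "act \<one> ([], 0) = ([], 0)" using act1 S[of "[]"] by simp
    then show ?case using one_closed by (intro exI[of _ "[]"] exI[of _ \<one>]) (auto intro: generate.one)
  next
    case (Cons x l)
    then obtain w h where v: "valid p t w" and h: "h \<in> ?H" and e: "prodl l = repw P Q w \<otimes> h"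
      and a: "act (prodl l) ([], 0) = (w, 0)" by auto
    have lc: "prodl l \<in> carrier G" using Cons.prems P Q by (auto intro!: prodl_closed)
    have hc: "h \<in> carrier G" using h subgroup.subset[OF HS] by auto
    have R: "\<And>w. repw P Q w \<in> carrier G" by (rule repw_closed[OF P Q])
    have x: "x = P \<or> x = Q" using Cons.prems by auto
    have act_x: "act (prodl (x # l)) ([], 0) = act x (w, 0)"
      using actM[of x "prodl l" "([], 0)"] x P Q lc S[of "[]"] a by auto
    show ?case
    proof (cases "x = P")
      case True
      define w' where "w' = tlg False w"
      define hd where "hd = hdg False w"
      define e' where "e' = (hd + 1) div p"
      have v': "valid p t w'" using tlg_valid[OF v] w'_def by simp
      have rw: "repw P Q w = P [^] hd \<otimes> repw P Q w'"
        using repw_hd_tl[OF P Q v, of False] hd_def w'_def by simp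
      have A: "Apow p 1 w = mk False ((hd + 1) mod p) w'" by (simp add: Apow_def hd_def w'_def)
      have rA: "repw P Q (Apow p 1 w) = P [^] ((hd + 1) mod p) \<otimes> repw P Q w'"
        using repw_mk[OF P Q] A by simp
      have "P \<otimes> P [^] hd = P [^] (hd + 1)" using P nat_pow_Suc2[OF P, of hd] by simp
      also have "\<dots> = P [^] ((hd + 1) mod p) \<otimes> Z [^] e'"
        using pow_split[OF P p, of "hd + 1"] Zd e'_def by simp
      finally have PP: "P \<otimes> P [^] hd = P [^] ((hd + 1) mod p) \<otimes> Z [^] e'" .
      have ZR: "Z [^] e' \<otimes> repw P Q w' = repw P Q w' \<otimes> Z [^] e'"
      proof -
        have "Z [^] e' \<in> carrier G" using Z by simp
        moreover have "Z [^] e' \<otimes> P = P \<otimes> Z [^] e'" and "Z [^] e' \<otimes> Q = Q \<otimes> Z [^] e'"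
        proof -
          have g: "Z [^] (k::nat) \<otimes> U = U \<otimes> Z [^] k" if "U \<in> carrier G" "Z \<otimes> U = U \<otimes> Z" for U k
          proof (induction k)
            case 0 then show ?case using that by simp
          next
            case (Suc k)
            have "Z [^] Suc k \<otimes> U = Z [^] k \<otimes> (Z \<otimes> U)" using that Z by (simp add: m_assoc)
            also have "\<dots> = (Z [^] k \<otimes> U) \<otimes> Z" using that Z by (simp add: m_assoc)
            also have "\<dots> = U \<otimes> Z [^] Suc k" using Suc that Z by (simp add: m_assoc)
            finally show ?case .
          qed
          show "Z [^] e' \<otimes> P = P \<otimes> Z [^] e'" by (rule g[OF P ZP])
          show "Z [^] e' \<otimes> Q = Q \<otimes> Z [^] e'" by (rule g[OF Q ZQ])
        qed
        ultimately show ?thesis using comm_repw[OF P Q] by blast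
      qed
      have ZeH: "Z [^] e' \<in> ?H" using sub_pow[OF HS ZH] by simp
      have "prodl (x # l) = P \<otimes> (P [^] hd \<otimes> repw P Q w') \<otimes> h" using True e rw P R hc
        by (simp add: m_assoc)
      also have "\<dots> = (P \<otimes> P [^] hd) \<otimes> repw P Q w' \<otimes> h" using P R by (simp add: m_assoc)
      also have "\<dots> = P [^] ((hd + 1) mod p) \<otimes> (Z [^] e' \<otimes> repw P Q w') \<otimes> h"
        using PP P R Z by (simp add: m_assoc)
      also have "\<dots> = P [^] ((hd + 1) mod p) \<otimes> repw P Q w' \<otimes> (Z [^] e' \<otimes> h)"
        using ZR P R Z hc by (simp add: m_assoc)
      also have "\<dots> = repw P Q (Apow p 1 w) \<otimes> (Z [^] e' \<otimes> h)" using rA by simp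
      finally have eq: "prodl (x # l) = repw P Q (Apow p 1 w) \<otimes> (Z [^] e' \<otimes> h)" .
      have "Z [^] e' \<otimes> h \<in> ?H" using ZeH h subgroup.m_closed[OF HS] by blast
      moreover have "valid p t (Apow p 1 w)" using Apow_props[OF v p] by blast
      moreover have "act (prodl (x # l)) ([], 0) = (Apow p 1 w, 0)" using act_x actP[OF v] True by simp
      ultimately show ?thesis using eq by blast
    next
      case False
      then have xQ: "x = Q" using x by simp
      show ?thesis
      proof (cases "tlg True w = []")
        case True
        have rw: "repw P Q w = Q [^] hdg True w" using repw_hd_tl[OF P Q v, of True] True Q by simp
        have rH: "repw P Q w \<in> ?H" using rw sub_pow[OF HS QH] by simp
        define h' where "h' = inv (repw P Q w) \<otimes> Q \<otimes> repw P Q w \<otimes> h"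
        have h'H: "h' \<in> ?H" unfolding h'_def using rH QH h subgroup.m_closed[OF HS] subgroup.m_inv_closed[OF HS]
          by blast
        have "prodl (x # l) = repw P Q w \<otimes> h'" unfolding h'_def using xQ e R Q hc
          by (simp add: m_assoc[symmetric])
        moreover have "Dpow t 1 w = w" using True by (rule Dpow_triv)
        ultimately show ?thesis using act_x actQ[OF v] xQ h'H v by auto
      next
        case False
        define w' where "w' = tlg True w"
        define hd where "hd = hdg True w"
        have rw: "repw P Q w = Q [^] hd \<otimes> repw P Q w'"
          using repw_hd_tl[OF P Q v, of True] hd_def w'_def by simp
        have D: "Dpow t 1 w = mk True ((hd + 1) mod t) w'" using False by (simp add: Dpow_def hd_def w'_def)
        have rD: "repw P Q (Dpow t 1 w) = Q [^] ((hd + 1) mod t) \<otimes> repw P Q w'"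
          using repw_mk[OF P Q] D by simp
        have "Q \<otimes> Q [^] hd = Q [^] (hd + 1)" using Q nat_pow_Suc2[OF Q, of hd] by simp
        also have "\<dots> = Q [^] ((hd + 1) mod t) \<otimes> (Q [^] t) [^] ((hd + 1) div t)"
          using pow_split[OF Q tp, of "hd + 1"] by simp
        also have "\<dots> = Q [^] ((hd + 1) mod t)" using Qt Q by simp
        finally have QQ: "Q \<otimes> Q [^] hd = Q [^] ((hd + 1) mod t)" .
        have "prodl (x # l) = (Q \<otimes> Q [^] hd) \<otimes> repw P Q w' \<otimes> h" using xQ e rw Q R hc
          by (simp add: m_assoc)
        also have "\<dots> = repw P Q (Dpow t 1 w) \<otimes> h" using QQ rD by simp
        finally have eq: "prodl (x # l) = repw P Q (Dpow t 1 w) \<otimes> h" .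
        have "valid p t (Dpow t 1 w)" by (rule Dpow_valid[OF v tp])
        moreover have "act (prodl (x # l)) ([], 0) = (Dpow t 1 w, 0)" using act_x actQ[OF v] xQ by simp
        ultimately show ?thesis using eq h by blast
      qed
    qed
  qed
  then show ?thesis using l by simp
qed

lemma rep_cor:
  assumes P: "P \<in> carrier G" and Q: "Q \<in> carrier G" and p: "0 < p" and tp: "0 < t"
    and Zd: "Z = P [^] p" and Qt: "Q [^] t = \<one>" and Ppt: "P [^] (p * t) = \<one>"
    and ZQ: "Z \<otimes> Q = Q \<otimes> Z"
    and actM: "\<And>x y s. x \<in> carrier G \<Longrightarrow> y \<in> carrier G \<Longrightarrow> s \<in> S \<Longrightarrow> act (x \<otimes> y) s = act x (act y s)"
    and act1: "\<And>s. s \<in> S \<Longrightarrow> act \<one> s = s"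
    and actP: "\<And>w. valid p t w \<Longrightarrow> act P (w, 0) = (Apow p 1 w, 0)"
    and actQ: "\<And>w. valid p t w \<Longrightarrow> act Q (w, 0) = (Dpow t 1 w, 0)"
    and S: "\<And>w. valid p t w \<Longrightarrow> (w, 0) \<in> S"
    and y: "y \<in> generate G (insert P (generate G {Z, Q}))"
    and yH: "y \<notin> generate G {Z, Q}"
  shows "\<exists>w. valid p t w \<and> tlg True w \<noteq> [] \<and> act y ([], 0) = (w, 0)"
proof -
  obtain w h where v: "valid p t w" and h: "h \<in> generate G {Z, Q}" and e: "y = repw P Q w \<otimes> h"
    and a: "act y ([], 0) = (w, 0)"
    using rep_main[OF P Q p tp Zd Qt Ppt ZQ actM act1 actP actQ S y] by blast
  have Z: "Z \<in> carrier G" using Zd P by simp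
  have HS: "subgroup (generate G {Z, Q}) G" by (rule generate_is_subgroup) (use Z Q in auto)
  have QH: "Q \<in> generate G {Z, Q}" by (auto intro: generate.incl)
  have "tlg True w \<noteq> []"
  proof
    assume T: "tlg True w = []"
    have rw: "repw P Q w = Q [^] hdg True w" using repw_hd_tl[OF P Q v, of True] T Q by simp
    have "repw P Q w \<in> generate G {Z, Q}" using rw sub_pow[OF HS QH] by simp
    then have "y \<in> generate G {Z, Q}" using e h subgroup.m_closed[OF HS] by blast
    then show False using yH by simp
  qed
  then show ?thesis using v a by blast
qed

end


lemma cls_in: "cls m n t w \<in> carrier (Gmnt m n t)" by (simp add: carrier_G)
lemma gen_a_cls: "gen_a m n t = cls m n t (ltr False)" by (simp add: gen_a_def)
lemma gen_b_cls: "gen_b m n t = cls m n t (ltr True)" by (simp add: gen_b_def)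

lemma wpow_Suc': "wpow w (Suc k) = wpow w k @ w"
  by (induction k) (simp_all add: wpow_def)

lemma cls_pow: "cls m n t w [^]\<^bsub>Gmnt m n t\<^esub> (k::nat) = cls m n t (wpow w k)"
proof (induction k)
  case 0 then show ?case by (simp add: one_cls wpow_def)
next
  case (Suc k) then show ?case by (simp add: mult_cls wpow_Suc')
qed

lemma cls_winv: "inv\<^bsub>Gmnt m n t\<^esub> (cls m n t w) = cls m n t (winv w)"
proof -
  interpret group "Gmnt m n t" by (rule group_G)
  have "cls m n t (winv w) \<otimes>\<^bsub>Gmnt m n t\<^esub> cls m n t w = \<one>\<^bsub>Gmnt m n t\<^esub>"
    by (simp add: mult_cls one_cls cls_eq winv_cancel)
  then show ?thesis using cls_in by (intro inv_equality) auto
qed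

lemma cls_rel: "r \<in> relators m n t \<Longrightarrow> cls m n t r = \<one>\<^bsub>Gmnt m n t\<^esub>"
  using weq_rel[of r m n t "[]" "[]"] by (simp add: one_cls cls_eq)

lemma gen_c_cls: "gen_c m n t = cls m n t (wpow (ltr False) m)"
  by (simp add: gen_c_def gen_a_cls cls_pow)
lemma gen_d_cls: "gen_d m n t = cls m n t (wpow (ltr True) n)"
  by (simp add: gen_d_def gen_b_cls cls_pow)

lemma a_order: "gen_a m n t [^]\<^bsub>Gmnt m n t\<^esub> (m * t) = \<one>\<^bsub>Gmnt m n t\<^esub>"
  by (simp add: gen_a_cls cls_pow cls_rel relators_def)
lemma b_order: "gen_b m n t [^]\<^bsub>Gmnt m n t\<^esub> (n * t) = \<one>\<^bsub>Gmnt m n t\<^esub>"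
  by (simp add: gen_b_cls cls_pow cls_rel relators_def)

lemma cd_comm: "gen_c m n t \<otimes>\<^bsub>Gmnt m n t\<^esub> gen_d m n t = gen_d m n t \<otimes>\<^bsub>Gmnt m n t\<^esub> gen_c m n t"
proof -
  interpret group "Gmnt m n t" by (rule group_G)
  let ?A = "wpow (ltr False) m" and ?B = "wpow (ltr True) n"
  let ?c = "gen_c m n t" and ?d = "gen_d m n t"
  have c: "?c \<in> carrier (Gmnt m n t)" and d: "?d \<in> carrier (Gmnt m n t)"
    by (simp_all add: gen_c_cls gen_d_cls cls_in)
  have "cls m n t (winv ?A @ winv ?B @ ?A @ ?B) = \<one>\<^bsub>Gmnt m n t\<^esub>"
    by (rule cls_rel) (simp add: relators_def)
  then have h: "inv\<^bsub>Gmnt m n t\<^esub> ?c \<otimes>\<^bsub>Gmnt m n t\<^esub> (inv\<^bsub>Gmnt m n t\<^esub> ?d \<otimes>\<^bsub>Gmnt m n t\<^esub> (?c \<otimes>\<^bsub>Gmnt m n t\<^esub> ?d)) = \<one>\<^bsub>Gmnt m n t\<^esub>"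
    by (simp add: gen_c_cls gen_d_cls cls_winv mult_cls)
  have "inv\<^bsub>Gmnt m n t\<^esub> ?d \<otimes>\<^bsub>Gmnt m n t\<^esub> (?c \<otimes>\<^bsub>Gmnt m n t\<^esub> ?d) = ?c"
    using h inv_solve_left'[of "\<one>\<^bsub>Gmnt m n t\<^esub>" ?c "inv\<^bsub>Gmnt m n t\<^esub> ?d \<otimes>\<^bsub>Gmnt m n t\<^esub> (?c \<otimes>\<^bsub>Gmnt m n t\<^esub> ?d)"] c d
    by simp
  then show ?thesis
    using inv_solve_left'[of ?c ?d "?c \<otimes>\<^bsub>Gmnt m n t\<^esub> ?d"] c d by simp
qed

lemma ActG_int_pow:
  assumes gd: "good m n t Y f" and tp: "0 < t" and P: "P \<in> carrier (Gmnt m n t)"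
    and phi: "\<And>y. y \<in> Y \<Longrightarrow> ActG m n t f P y = \<phi> 1 y"
    and phiY: "\<And>j y. y \<in> Y \<Longrightarrow> \<phi> j y \<in> Y"
    and phi0: "\<And>y. y \<in> Y \<Longrightarrow> \<phi> 0 y = y"
    and phiadd: "\<And>i j y. y \<in> Y \<Longrightarrow> \<phi> i (\<phi> j y) = \<phi> (i + j) y"
    and phit: "\<And>y. y \<in> Y \<Longrightarrow> \<phi> t y = y"
    and y: "y \<in> Y"
  shows "ActG m n t f (P [^]\<^bsub>Gmnt m n t\<^esub> (k::int)) y = \<phi> (nat (k mod int t)) y"
proof -
  interpret group "Gmnt m n t" by (rule group_G)
  have natpow: "ActG m n t f (P [^]\<^bsub>Gmnt m n t\<^esub> (j::nat)) z = \<phi> j z" if z: "z \<in> Y" for j z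
    using z
  proof (induction j arbitrary: z)
    case 0 then show ?case using ActG_one[OF gd] phi0 by simp
  next
    case (Suc j)
    have "ActG m n t f (P [^]\<^bsub>Gmnt m n t\<^esub> Suc j) z
        = ActG m n t f (P [^]\<^bsub>Gmnt m n t\<^esub> j) (ActG m n t f P z)"
      using ActG_mult[OF gd Suc.prems, of "P [^]\<^bsub>Gmnt m n t\<^esub> j" P] P by simp
    also have "\<dots> = \<phi> j (\<phi> 1 z)" using Suc.IH phi phiY Suc.prems by simp
    also have "\<dots> = \<phi> (Suc j) z" using phiadd Suc.prems by simp
    finally show ?case .
  qed
  have mult_t: "\<phi> (t * q) z = z" if z: "z \<in> Y" for q z
  proof (induction q)
    case 0 then show ?case using phi0 z by simp
  next
    case (Suc q)
    have "\<phi> (t * Suc q) z = \<phi> t (\<phi> (t * q) z)" using phiadd z by (simp add: add.commute)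
    then show ?case using Suc phit z by simp
  qed
  have period: "\<phi> j z = \<phi> (j mod t) z" if z: "z \<in> Y" for j z
  proof -
    have "\<phi> j z = \<phi> (j mod t + t * (j div t)) z" by simp
    also have "\<dots> = \<phi> (j mod t) (\<phi> (t * (j div t)) z)" using phiadd z by simp
    also have "\<dots> = \<phi> (j mod t) z" using mult_t z by simp
    finally show ?thesis .
  qed
  show ?thesis
  proof (cases "k < 0")
    case False
    have "P [^]\<^bsub>Gmnt m n t\<^esub> k = P [^]\<^bsub>Gmnt m n t\<^esub> nat k"
      by (rule pow_nat[symmetric]) (use False in simp)
    moreover have "nat (k mod int t) = nat k mod t" using False tp by (simp add: nat_mod_distrib)
    ultimately show ?thesis using natpow[OF y, of "nat k"] period[OF y, of "nat k"] by simp
  next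
    case True
    let ?Q = "P [^]\<^bsub>Gmnt m n t\<^esub> nat (- k)"
    have Qc: "?Q \<in> carrier (Gmnt m n t)" using P by simp
    have e1: "P [^]\<^bsub>Gmnt m n t\<^esub> k = inv\<^bsub>Gmnt m n t\<^esub> (P [^]\<^bsub>Gmnt m n t\<^esub> (- k))"
      using int_pow_neg[OF P, of "- k"] by simp
    have e2: "P [^]\<^bsub>Gmnt m n t\<^esub> (- k) = ?Q"
      by (rule pow_nat[symmetric]) (use True in simp)
    have eq: "P [^]\<^bsub>Gmnt m n t\<^esub> k = inv\<^bsub>Gmnt m n t\<^esub> ?Q" using e1 e2 by simp
    define z where "z = \<phi> (nat (k mod int t)) y"
    have zY: "z \<in> Y" using phiY y z_def by simp
    have "- k + k mod int t = - ((k div int t) * int t)"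
      using minus_div_mult_eq_mod[of k "int t"] by linarith
    then have "int t dvd (- k + k mod int t)" by simp
    moreover have "int (nat (- k) + nat (k mod int t)) = - k + k mod int t" using True tp by simp
    ultimately have "int t dvd int (nat (- k) + nat (k mod int t))" by simp
    then have "t dvd (nat (- k) + nat (k mod int t))" by (simp only: int_dvd_int_iff)
    then have m0: "(nat (- k) + nat (k mod int t)) mod t = 0" by simp
    have "ActG m n t f ?Q z = \<phi> (nat (- k)) z" by (rule natpow[OF zY])
    also have "\<dots> = \<phi> (nat (- k) + nat (k mod int t)) y" using phiadd y z_def by simp
    also have "\<dots> = y" using period[OF y, of "nat (- k) + nat (k mod int t)"] m0 phi0 y by simp
    finally have Qz: "ActG m n t f ?Q z = y" .
    have "ActG m n t f (inv\<^bsub>Gmnt m n t\<^esub> ?Q) y = z"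
      using ActG_inv[OF gd zY Qc] Qz by simp
    then show ?thesis using eq z_def by simp
  qed
qed


lemma core_word:
  fixes m n t p q :: nat and T Q x y :: "word set" and a1 b1 a2 b2 a1' b1' a2' b2' :: int
  assumes gd: "good m n t (YW p q t) f" and tp: "0 < t" and q: "0 < q"
    and T: "T \<in> carrier (Gmnt m n t)" and Q: "Q \<in> carrier (Gmnt m n t)" and yc: "y \<in> carrier (Gmnt m n t)"
    and actT: "\<And>s. s \<in> YW p q t \<Longrightarrow> ActG m n t f T s = s"
    and actQ: "\<And>w r. (w, r) \<in> YW p q t \<Longrightarrow> ActG m n t f Q (w, r) = (Dpow t 1 w, r)"
    and y1: "ActG m n t f y ([], 0) = (w1, 0)" "valid p t w1" "tlg True w1 \<noteq> []"
    and y2: "ActG m n t f (inv\<^bsub>Gmnt m n t\<^esub> y) ([], 0) = (w2, 0)" "valid p t w2" "tlg True w2 \<noteq> []"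
    and E: "\<And>a b. E a b = (if sw then Q [^]\<^bsub>Gmnt m n t\<^esub> b \<otimes>\<^bsub>Gmnt m n t\<^esub> T [^]\<^bsub>Gmnt m n t\<^esub> a
                            else T [^]\<^bsub>Gmnt m n t\<^esub> a \<otimes>\<^bsub>Gmnt m n t\<^esub> Q [^]\<^bsub>Gmnt m n t\<^esub> b)"
    and x1: "x = E a1 b1 \<otimes>\<^bsub>Gmnt m n t\<^esub> y \<otimes>\<^bsub>Gmnt m n t\<^esub> E a2 b2"
    and x2: "x = E a1' b1' \<otimes>\<^bsub>Gmnt m n t\<^esub> y \<otimes>\<^bsub>Gmnt m n t\<^esub> E a2' b2'"
  shows "[b1 = b1'] (mod int t) \<and> [b2 = b2'] (mod int t)"
proof -
  interpret group "Gmnt m n t" by (rule group_G)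
  let ?Y = "YW p q t" and ?A = "ActG m n t f"
  have y0: "([], 0) \<in> ?Y" using q by (simp add: YW_def)
  have Tpow: "?A (T [^]\<^bsub>Gmnt m n t\<^esub> (k::int)) s = s" if s: "s \<in> ?Y" for k s
    using ActG_int_pow[OF gd tp T, of "\<lambda>j s. s" s k] actT s by simp
  have Qpow: "?A (Q [^]\<^bsub>Gmnt m n t\<^esub> (k::int)) (w, r) = (Dpow t (nat (k mod int t)) w, r)"
    if s: "(w, r) \<in> ?Y" for k w r
  proof -
    let ?phi = "\<lambda>j s. (Dpow t j (fst s), snd s)"
    have "?A (Q [^]\<^bsub>Gmnt m n t\<^esub> k) (w, r) = ?phi (nat (k mod int t)) (w, r)"
     
    proof (rule ActG_int_pow[OF gd tp Q])
      show "\<And>y. y \<in> ?Y \<Longrightarrow> ?A Q y = ?phi 1 y" using actQ by (auto simp: YW_def)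
      show "\<And>j y. y \<in> ?Y \<Longrightarrow> ?phi j y \<in> ?Y" using Dpow_valid tp by (auto simp: YW_def)
      show "\<And>y. y \<in> ?Y \<Longrightarrow> ?phi 0 y = y" using Dpow_dvd tp by (auto simp: YW_def)
      show "\<And>i j y. y \<in> ?Y \<Longrightarrow> ?phi i (?phi j y) = ?phi (i + j) y" using Dpow_Dpow tp by (auto simp: YW_def)
      show "\<And>y. y \<in> ?Y \<Longrightarrow> ?phi t y = y" using Dpow_dvd tp by (auto simp: YW_def)
      show "(w, r) \<in> ?Y" by (rule s)
    qed
    then show ?thesis by simp
  qed
  have Dnil: "Dpow t k [] = []" for k by (simp add: Dpow_triv tlg_def)
  have Qy0: "?A (Q [^]\<^bsub>Gmnt m n t\<^esub> (k::int)) ([], 0) = ([], 0)" for k using Qpow[OF y0] Dnil by simp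
  have inY: "(w, r) \<in> ?Y \<Longrightarrow> (Dpow t k w, r) \<in> ?Y" for w r k using Dpow_valid tp by (auto simp: YW_def)
  have Ec: "E a b \<in> carrier (Gmnt m n t)" for a b using E T Q by simp
  have Eact: "?A (E a b) (w, r) = (Dpow t (nat (b mod int t)) w, r)" if s: "(w, r) \<in> ?Y" for a b w r
  proof (cases sw)
    case True
    have "?A (E a b) (w, r) = ?A (Q [^]\<^bsub>Gmnt m n t\<^esub> b) (?A (T [^]\<^bsub>Gmnt m n t\<^esub> a) (w, r))"
      using E True ActG_mult[OF gd s] T Q by simp
    then show ?thesis using Tpow[OF s] Qpow[OF s] by simp
  next
    case False
    have "?A (E a b) (w, r) = ?A (T [^]\<^bsub>Gmnt m n t\<^esub> a) (?A (Q [^]\<^bsub>Gmnt m n t\<^esub> b) (w, r))"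
      using E False ActG_mult[OF gd s] T Q by simp
    then show ?thesis using Tpow inY[OF s] Qpow[OF s] by simp
  qed
  have Ey0: "?A (E a b) ([], 0) = ([], 0)" for a b using Eact[OF y0] Dnil by simp
  have Einv_act: "?A (inv\<^bsub>Gmnt m n t\<^esub> (E a b)) (w, r) = (Dpow t (nat ((- b) mod int t)) w, r)"
    if s: "(w, r) \<in> ?Y" for a b w r
  proof -
    have "inv\<^bsub>Gmnt m n t\<^esub> (E a b) = (if sw then T [^]\<^bsub>Gmnt m n t\<^esub> (- a) \<otimes>\<^bsub>Gmnt m n t\<^esub> Q [^]\<^bsub>Gmnt m n t\<^esub> (- b)
                         else Q [^]\<^bsub>Gmnt m n t\<^esub> (- b) \<otimes>\<^bsub>Gmnt m n t\<^esub> T [^]\<^bsub>Gmnt m n t\<^esub> (- a))"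
      using E T Q by (simp add: inv_mult_group int_pow_neg)
    moreover have "?A (T [^]\<^bsub>Gmnt m n t\<^esub> (- a) \<otimes>\<^bsub>Gmnt m n t\<^esub> Q [^]\<^bsub>Gmnt m n t\<^esub> (- b)) (w, r) = (Dpow t (nat ((- b) mod int t)) w, r)"
      using ActG_mult[OF gd s] T Q Tpow inY[OF s] Qpow[OF s] by simp
    moreover have "?A (Q [^]\<^bsub>Gmnt m n t\<^esub> (- b) \<otimes>\<^bsub>Gmnt m n t\<^esub> T [^]\<^bsub>Gmnt m n t\<^esub> (- a)) (w, r) = (Dpow t (nat ((- b) mod int t)) w, r)"
      using ActG_mult[OF gd s] T Q Tpow[OF s] Qpow[OF s] by simp
    ultimately show ?thesis by simp
  qed
  have Einv_y0: "?A (inv\<^bsub>Gmnt m n t\<^esub> (E a b)) ([], 0) = ([], 0)" for a b using Einv_act[OF y0] Dnil by simp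
  have w1Y: "(w1, 0) \<in> ?Y" and w2Y: "(w2, 0) \<in> ?Y" using y1 y2 q by (auto simp: YW_def)
  have ev: "?A (E a1 b1 \<otimes>\<^bsub>Gmnt m n t\<^esub> y \<otimes>\<^bsub>Gmnt m n t\<^esub> E a2 b2) ([], 0) = (Dpow t (nat (b1 mod int t)) w1, 0)" for a1 b1 a2 b2
  proof -
    have "?A (E a1 b1 \<otimes>\<^bsub>Gmnt m n t\<^esub> y \<otimes>\<^bsub>Gmnt m n t\<^esub> E a2 b2) ([], 0) = ?A (E a1 b1) (?A y (?A (E a2 b2) ([], 0)))"
      using ActG_mult[OF gd] Ec yc y0 ActG_closed[OF gd] by simp
    also have "\<dots> = (Dpow t (nat (b1 mod int t)) w1, 0)" using Ey0 y1(1) Eact[OF w1Y] by simp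
    finally show ?thesis .
  qed
  have evinv: "?A (inv\<^bsub>Gmnt m n t\<^esub> (E a1 b1 \<otimes>\<^bsub>Gmnt m n t\<^esub> y \<otimes>\<^bsub>Gmnt m n t\<^esub> E a2 b2)) ([], 0) = (Dpow t (nat ((- b2) mod int t)) w2, 0)" for a1 b1 a2 b2
  proof -
    have "inv\<^bsub>Gmnt m n t\<^esub> (E a1 b1 \<otimes>\<^bsub>Gmnt m n t\<^esub> y \<otimes>\<^bsub>Gmnt m n t\<^esub> E a2 b2) = inv\<^bsub>Gmnt m n t\<^esub> (E a2 b2) \<otimes>\<^bsub>Gmnt m n t\<^esub> inv\<^bsub>Gmnt m n t\<^esub> y \<otimes>\<^bsub>Gmnt m n t\<^esub> inv\<^bsub>Gmnt m n t\<^esub> (E a1 b1)"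
      using Ec yc by (simp add: inv_mult_group m_assoc)
    moreover have "?A (inv\<^bsub>Gmnt m n t\<^esub> (E a2 b2) \<otimes>\<^bsub>Gmnt m n t\<^esub> inv\<^bsub>Gmnt m n t\<^esub> y \<otimes>\<^bsub>Gmnt m n t\<^esub> inv\<^bsub>Gmnt m n t\<^esub> (E a1 b1)) ([], 0)
        = ?A (inv\<^bsub>Gmnt m n t\<^esub> (E a2 b2)) (?A (inv\<^bsub>Gmnt m n t\<^esub> y) (?A (inv\<^bsub>Gmnt m n t\<^esub> (E a1 b1)) ([], 0)))"
      using ActG_mult[OF gd] Ec yc y0 ActG_closed[OF gd] by simp
    ultimately show ?thesis using Einv_y0 y2(1) Einv_act[OF w2Y] by simp
  qed
  have key: "[u = u'] (mod int t)" if "Dpow t (nat (u mod int t)) w = Dpow t (nat (u' mod int t)) w"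
    "valid p t w" "tlg True w \<noteq> []" for u u' w
  proof -
    have "nat (u mod int t) mod t = nat (u' mod int t) mod t" by (rule Dpow_inj[OF that(2) tp that(3) that(1)])
    moreover have "nat (u mod int t) < t" "nat (u' mod int t) < t" using tp by (simp_all add: nat_less_iff)
    ultimately have "nat (u mod int t) = nat (u' mod int t)" by simp
    moreover have "0 \<le> u mod int t" "0 \<le> u' mod int t" using tp by simp_all
    ultimately have "u mod int t = u' mod int t" by (simp add: eq_nat_nat_iff)
    then show ?thesis by (simp add: cong_def)
  qed
  have e1: "(Dpow t (nat (b1 mod int t)) w1, 0::nat) = (Dpow t (nat (b1' mod int t)) w1, 0)"
    using ev[of a1 b1 a2 b2] ev[of a1' b1' a2' b2'] x1 x2 by simp
  have B1: "[b1 = b1'] (mod int t)" using e1 by (intro key[OF _ y1(2) y1(3)]) simp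
  have e2: "(Dpow t (nat ((- b2) mod int t)) w2, 0::nat) = (Dpow t (nat ((- b2') mod int t)) w2, 0)"
    using evinv[of a1 b1 a2 b2] evinv[of a1' b1' a2' b2'] x1 x2 by simp
  have "[- b2 = - b2'] (mod int t)" using e2 by (intro key[OF _ y2(2) y2(3)]) simp
  then have B2: "[b2 = b2'] (mod int t)" by (simp add: cong_minus_minus_iff)
  show ?thesis using B1 B2 by blast
qed


lemma core_exp:
  fixes m n t N s :: nat and T Q x y :: "word set" and a1 b1 a2 b2 a1' b1' a2' b2' :: int
  assumes gd: "good m n t {..<N} f" and N: "N = s * t" and s: "0 < s" and tp: "0 < t"
    and T: "T \<in> carrier (Gmnt m n t)" and Q: "Q \<in> carrier (Gmnt m n t)" and yc: "y \<in> carrier (Gmnt m n t)"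
    and actT: "\<And>r. r < N \<Longrightarrow> ActG m n t f T r = (r + s) mod N"
    and actQ: "\<And>r. r < N \<Longrightarrow> ActG m n t f Q r = r"
    and transl: "\<And>r. r < N \<Longrightarrow> ActG m n t f y r = (r + ActG m n t f y 0) mod N"
    and E: "\<And>a b. E a b = (if sw then Q [^]\<^bsub>Gmnt m n t\<^esub> b \<otimes>\<^bsub>Gmnt m n t\<^esub> T [^]\<^bsub>Gmnt m n t\<^esub> a
                            else T [^]\<^bsub>Gmnt m n t\<^esub> a \<otimes>\<^bsub>Gmnt m n t\<^esub> Q [^]\<^bsub>Gmnt m n t\<^esub> b)"
    and x1: "x = E a1 b1 \<otimes>\<^bsub>Gmnt m n t\<^esub> y \<otimes>\<^bsub>Gmnt m n t\<^esub> E a2 b2"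
    and x2: "x = E a1' b1' \<otimes>\<^bsub>Gmnt m n t\<^esub> y \<otimes>\<^bsub>Gmnt m n t\<^esub> E a2' b2'"
  shows "[a1 + a2 = a1' + a2'] (mod int t)"
proof -
  interpret group "Gmnt m n t" by (rule group_G)
  let ?Y = "{..<N}" and ?A = "ActG m n t f"
  have N0: "0 < N" using N s tp by simp
  have y0: "0 \<in> ?Y" using N0 by simp
  have Tpow: "?A (T [^]\<^bsub>Gmnt m n t\<^esub> (k::int)) r = (r + s * nat (k mod int t)) mod N"
    if r: "r \<in> ?Y" for k r
  proof (rule ActG_int_pow[OF gd tp T, of "\<lambda>j r. (r + s * j) mod N"])
    show "\<And>y. y \<in> ?Y \<Longrightarrow> ?A T y = (y + s * 1) mod N" using actT by simp
    show "\<And>j y. y \<in> ?Y \<Longrightarrow> (y + s * j) mod N \<in> ?Y" using N0 by simp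
    show "\<And>y. y \<in> ?Y \<Longrightarrow> (y + s * 0) mod N = y" by simp
    show "\<And>i j y. y \<in> ?Y \<Longrightarrow> ((y + s * j) mod N + s * i) mod N = (y + s * (i + j)) mod N"
    proof -
      fix i j y
      have "((y + s * j) mod N + s * i) mod N = (y + s * j + s * i) mod N" by (rule mod_add_left_eq)
      then show "((y + s * j) mod N + s * i) mod N = (y + s * (i + j)) mod N"
        by (simp add: algebra_simps)
    qed
    show "\<And>y. y \<in> ?Y \<Longrightarrow> (y + s * t) mod N = y" using N by simp
    show "r \<in> ?Y" by (rule r)
  qed
  have Qpow: "?A (Q [^]\<^bsub>Gmnt m n t\<^esub> (k::int)) r = r" if r: "r \<in> ?Y" for k r
    using ActG_int_pow[OF gd tp Q, of "\<lambda>j r. r" r k] actQ r by simp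
  have Ec: "E a b \<in> carrier (Gmnt m n t)" for a b using E T Q by simp
  have inY: "(r + s * j) mod N \<in> ?Y" for r j using N0 by simp
  have Eact: "?A (E a b) r = (r + s * nat (a mod int t)) mod N" if r: "r \<in> ?Y" for a b r
  proof (cases sw)
    case True
    have "?A (E a b) r = ?A (Q [^]\<^bsub>Gmnt m n t\<^esub> b) (?A (T [^]\<^bsub>Gmnt m n t\<^esub> a) r)"
      using E True ActG_mult[OF gd r] T Q by simp
    then show ?thesis using Tpow[OF r] Qpow inY by simp
  next
    case False
    have "?A (E a b) r = ?A (T [^]\<^bsub>Gmnt m n t\<^esub> a) (?A (Q [^]\<^bsub>Gmnt m n t\<^esub> b) r)"
      using E False ActG_mult[OF gd r] T Q by simp
    then show ?thesis using Tpow[OF r] Qpow[OF r] by simp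
  qed
  define sy where "sy = ?A y 0"
  have ev: "?A (E a1 b1 \<otimes>\<^bsub>Gmnt m n t\<^esub> y \<otimes>\<^bsub>Gmnt m n t\<^esub> E a2 b2) 0
      = (s * (nat (a1 mod int t) + nat (a2 mod int t)) + sy) mod N" for a1 b1 a2 b2
  proof -
    let ?j1 = "nat (a1 mod int t)" and ?j2 = "nat (a2 mod int t)"
    have "?A (E a1 b1 \<otimes>\<^bsub>Gmnt m n t\<^esub> y \<otimes>\<^bsub>Gmnt m n t\<^esub> E a2 b2) 0 = ?A (E a1 b1) (?A y (?A (E a2 b2) 0))"
      using ActG_mult[OF gd] Ec yc y0 ActG_closed[OF gd] by simp
    also have "\<dots> = ?A (E a1 b1) (?A y ((s * ?j2) mod N))" using Eact[OF y0] by simp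
    also have "\<dots> = ?A (E a1 b1) (((s * ?j2) mod N + sy) mod N)"
    proof -
      have "?A y ((s * ?j2) mod N) = ((s * ?j2) mod N + ?A y 0) mod N" by (rule transl) (use N0 in simp)
      then show ?thesis unfolding sy_def by simp
    qed
    also have "\<dots> = (((s * ?j2) mod N + sy) mod N + s * ?j1) mod N" by (rule Eact) (use N0 in simp)
    also have "\<dots> = (s * (?j1 + ?j2) + sy) mod N" by (simp add: mod_simps algebra_simps)
    finally show ?thesis .
  qed
  let ?J = "nat (a1 mod int t) + nat (a2 mod int t)" and ?J' = "nat (a1' mod int t) + nat (a2' mod int t)"
  have "(s * ?J + sy) mod N = (s * ?J' + sy) mod N"
    using ev[of a1 b1 a2 b2] ev[of a1' b1' a2' b2'] x1 x2 by simp
  then have "[s * ?J + sy = s * ?J' + sy] (mod N)" by (simp add: cong_def)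
  then have "[s * ?J = s * ?J'] (mod N)" by (simp add: cong_add_rcancel_nat)
  then have "(s * ?J) mod (s * t) = (s * ?J') mod (s * t)" using N by (simp add: cong_def)
  then have "s * (?J mod t) = s * (?J' mod t)" by (simp add: mod_mult_mult1)
  then have "?J mod t = ?J' mod t" using s by simp
  then have "int (?J mod t) = int (?J' mod t)" by simp
  then have "int ?J mod int t = int ?J' mod int t" by (simp only: of_nat_mod)
  moreover have "int ?J = a1 mod int t + a2 mod int t" "int ?J' = a1' mod int t + a2' mod int t"
    using tp by simp_all
  ultimately have "(a1 mod int t + a2 mod int t) mod int t = (a1' mod int t + a2' mod int t) mod int t"
    by simp
  then have "(a1 + a2) mod int t = (a1' + a2') mod int t" by (simp add: mod_add_eq)
  then show ?thesis by (simp add: cong_def)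
qed


lemma lemma2_A:
  fixes m n t :: nat
  assumes m: "1 < m" and n: "1 < n" and t: "1 < t"
  shows "\<forall>x \<in> At m n t. \<forall>y \<in> At m n t. x \<notin> Ht m n t \<longrightarrow> y \<notin> Ht m n t \<longrightarrow>
            (\<forall>\<alpha> \<beta> \<gamma> \<delta> \<alpha>' \<beta>' \<gamma>' \<delta>' :: int.
               x = gen_c m n t [^]\<^bsub>Gmnt m n t\<^esub> \<alpha> \<otimes>\<^bsub>Gmnt m n t\<^esub> gen_d m n t [^]\<^bsub>Gmnt m n t\<^esub> \<beta> \<otimes>\<^bsub>Gmnt m n t\<^esub> y \<otimes>\<^bsub>Gmnt m n t\<^esub> gen_c m n t [^]\<^bsub>Gmnt m n t\<^esub> \<gamma> \<otimes>\<^bsub>Gmnt m n t\<^esub> gen_d m n t [^]\<^bsub>Gmnt m n t\<^esub> \<delta> \<longrightarrow>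
               x = gen_c m n t [^]\<^bsub>Gmnt m n t\<^esub> \<alpha>' \<otimes>\<^bsub>Gmnt m n t\<^esub> gen_d m n t [^]\<^bsub>Gmnt m n t\<^esub> \<beta>' \<otimes>\<^bsub>Gmnt m n t\<^esub> y \<otimes>\<^bsub>Gmnt m n t\<^esub> gen_c m n t [^]\<^bsub>Gmnt m n t\<^esub> \<gamma>' \<otimes>\<^bsub>Gmnt m n t\<^esub> gen_d m n t [^]\<^bsub>Gmnt m n t\<^esub> \<delta>' \<longrightarrow>
               [\<alpha> + \<gamma> = \<alpha>' + \<gamma>'] (mod int t) \<and> [\<beta> = \<beta>'] (mod int t) \<and> [\<delta> = \<delta>'] (mod int t))"
proof (intro ballI impI allI)
  interpret group "Gmnt m n t" by (rule group_G)
  have tp: "0 < t" using t by simp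
  let ?c = "gen_c m n t" and ?d = "gen_d m n t" and ?a = "gen_a m n t"
  let ?f = "fW False m n t" and ?Y = "YW m n t"
  have ac: "?a \<in> carrier (Gmnt m n t)" by (simp add: gen_a_cls cls_in)
  have cc: "?c \<in> carrier (Gmnt m n t)" by (simp add: gen_c_cls cls_in)
  have dc: "?d \<in> carrier (Gmnt m n t)" by (simp add: gen_d_cls cls_in)
  have Ht: "Ht m n t = generate (Gmnt m n t) {?c, ?d}" by (simp add: Ht_def)
  have At: "At m n t = generate (Gmnt m n t) (insert ?a (generate (Gmnt m n t) {?c, ?d}))"
    by (simp add: At_def Ht_def)
  have gd: "good m n t ?Y ?f" by (rule goodW_F) (use m n tp in auto)
  have Zd: "?c = ?a [^]\<^bsub>Gmnt m n t\<^esub> m" by (simp add: gen_c_def)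
  have dt: "?d [^]\<^bsub>Gmnt m n t\<^esub> t = \<one>\<^bsub>Gmnt m n t\<^esub>"
    using b_order[of m n t] nat_pow_pow[of "gen_b m n t" n t] by (simp add: gen_d_def gen_b_cls cls_in)
  have ZQ: "?c \<otimes>\<^bsub>Gmnt m n t\<^esub> ?d = ?d \<otimes>\<^bsub>Gmnt m n t\<^esub> ?c" by (rule cd_comm)
  have actM: "\<And>x y s. x \<in> carrier (Gmnt m n t) \<Longrightarrow> y \<in> carrier (Gmnt m n t) \<Longrightarrow> s \<in> ?Y \<Longrightarrow>
      ActG m n t ?f (x \<otimes>\<^bsub>Gmnt m n t\<^esub> y) s = ActG m n t ?f x (ActG m n t ?f y s)"
    using ActG_mult[OF gd] by blast
  have act1: "\<And>s. s \<in> ?Y \<Longrightarrow> ActG m n t ?f \<one>\<^bsub>Gmnt m n t\<^esub> s = s" using ActG_one[OF gd] by blast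
  have S: "\<And>w. valid m t w \<Longrightarrow> (w, 0) \<in> ?Y" using n by (simp add: YW_def)
  have actP: "ActG m n t ?f ?a (w, 0) = (Apow m 1 w, 0)" if v: "valid m t w" for w
    using ActG_cls[OF gd S[OF v], of "ltr False"] by (simp add: gen_a_cls ltr_def fW_prim)
  have actQ: "ActG m n t ?f ?d (w, r) = (Dpow t 1 w, r)" if s: "(w, r) \<in> ?Y" for w r
  proof -
    have v: "valid m t w" and r: "r < n" using s by (auto simp: YW_def)
    have "ActG m n t ?f ?d (w, r) = (?f (True, False) ^^ n) (w, r)"
      using ActG_cls[OF gd s] by (simp add: gen_d_cls actw_wpow)
    also have "\<dots> = (Dpow t ((r + n) div n) w, (r + n) mod n)"
      by (rule sec_pow) (use n tp v r in auto)
    finally show ?thesis using r by simp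
  qed
  have actQ0: "\<And>w. valid m t w \<Longrightarrow> ActG m n t ?f ?d (w, 0) = (Dpow t 1 w, 0)" using actQ S by blast
  have actT: "ActG m n t ?f ?c s = s" if s: "s \<in> ?Y" for s
  proof -
    obtain w r where sw: "s = (w, r)" by (cases s)
    have v: "valid m t w" using s sw by (simp add: YW_def)
    have "ActG m n t ?f ?c s = (?f (False, False) ^^ m) (w, r)"
      using ActG_cls[OF gd s] sw by (simp add: gen_c_cls actw_wpow)
    also have "\<dots> = (Apow m m w, r)" by (rule prim_pow) (use m v in auto)
    also have "\<dots> = s" using Apow_dvd[OF v] m sw by simp
    finally show ?thesis .
  qed
  have rep: "\<exists>w. valid m t w \<and> tlg True w \<noteq> [] \<and> ActG m n t ?f z ([], 0) = (w, 0)"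
    if zA: "z \<in> At m n t" and zH: "z \<notin> Ht m n t" for z
    by (rule rep_cor[OF ac dc _ tp Zd dt a_order ZQ actM act1 actP actQ0 S])
       (use m zA zH At Ht in auto)
  fix x y :: "word set" and \<alpha> \<beta> \<gamma> \<delta> \<alpha>' \<beta>' \<gamma>' \<delta>' :: int
  assume xA: "x \<in> At m n t" and yA: "y \<in> At m n t" and xH: "x \<notin> Ht m n t" and yH: "y \<notin> Ht m n t"
  assume e1: "x = ?c [^]\<^bsub>Gmnt m n t\<^esub> \<alpha> \<otimes>\<^bsub>Gmnt m n t\<^esub> ?d [^]\<^bsub>Gmnt m n t\<^esub> \<beta> \<otimes>\<^bsub>Gmnt m n t\<^esub> y \<otimes>\<^bsub>Gmnt m n t\<^esub> ?c [^]\<^bsub>Gmnt m n t\<^esub> \<gamma> \<otimes>\<^bsub>Gmnt m n t\<^esub> ?d [^]\<^bsub>Gmnt m n t\<^esub> \<delta>"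
  assume e2: "x = ?c [^]\<^bsub>Gmnt m n t\<^esub> \<alpha>' \<otimes>\<^bsub>Gmnt m n t\<^esub> ?d [^]\<^bsub>Gmnt m n t\<^esub> \<beta>' \<otimes>\<^bsub>Gmnt m n t\<^esub> y \<otimes>\<^bsub>Gmnt m n t\<^esub> ?c [^]\<^bsub>Gmnt m n t\<^esub> \<gamma>' \<otimes>\<^bsub>Gmnt m n t\<^esub> ?d [^]\<^bsub>Gmnt m n t\<^esub> \<delta>'"
  have ASg: "subgroup (At m n t) (Gmnt m n t)" unfolding At_def
    by (rule generate_is_subgroup) (use ac generate_incl[of "{?c, ?d}"] cc dc Ht in auto)
  have HSg: "subgroup (Ht m n t) (Gmnt m n t)" unfolding Ht
    by (rule generate_is_subgroup) (use cc dc in auto)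
  have yc: "y \<in> carrier (Gmnt m n t)" using yA subgroup.subset[OF ASg] by auto
  obtain w1 where w1: "valid m t w1" "tlg True w1 \<noteq> []" "ActG m n t ?f y ([], 0) = (w1, 0)"
    using rep[OF yA yH] by blast
  have iyA: "inv\<^bsub>Gmnt m n t\<^esub> y \<in> At m n t" using subgroup.m_inv_closed[OF ASg yA] .
  have iyH: "inv\<^bsub>Gmnt m n t\<^esub> y \<notin> Ht m n t"
  proof
    assume "inv\<^bsub>Gmnt m n t\<^esub> y \<in> Ht m n t"
    then have "inv\<^bsub>Gmnt m n t\<^esub> (inv\<^bsub>Gmnt m n t\<^esub> y) \<in> Ht m n t" by (rule subgroup.m_inv_closed[OF HSg])
    then show False using yH yc by simp
  qed
  obtain w2 where w2: "valid m t w2" "tlg True w2 \<noteq> []" "ActG m n t ?f (inv\<^bsub>Gmnt m n t\<^esub> y) ([], 0) = (w2, 0)"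
    using rep[OF iyA iyH] by blast
  define E where "E = (\<lambda>(a::int) (b::int). if False then ?d [^]\<^bsub>Gmnt m n t\<^esub> b \<otimes>\<^bsub>Gmnt m n t\<^esub> ?c [^]\<^bsub>Gmnt m n t\<^esub> a
                            else ?c [^]\<^bsub>Gmnt m n t\<^esub> a \<otimes>\<^bsub>Gmnt m n t\<^esub> ?d [^]\<^bsub>Gmnt m n t\<^esub> b)"
  have Eform: "?c [^]\<^bsub>Gmnt m n t\<^esub> a1 \<otimes>\<^bsub>Gmnt m n t\<^esub> ?d [^]\<^bsub>Gmnt m n t\<^esub> b1 \<otimes>\<^bsub>Gmnt m n t\<^esub> y \<otimes>\<^bsub>Gmnt m n t\<^esub> ?c [^]\<^bsub>Gmnt m n t\<^esub> a2 \<otimes>\<^bsub>Gmnt m n t\<^esub> ?d [^]\<^bsub>Gmnt m n t\<^esub> b2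
      = E a1 b1 \<otimes>\<^bsub>Gmnt m n t\<^esub> y \<otimes>\<^bsub>Gmnt m n t\<^esub> E a2 b2" for a1 b1 a2 b2 :: int
    unfolding E_def using cc dc yc by (simp add: m_assoc)
  have x1: "x = E \<alpha> \<beta> \<otimes>\<^bsub>Gmnt m n t\<^esub> y \<otimes>\<^bsub>Gmnt m n t\<^esub> E \<gamma> \<delta>" using e1 Eform by simp
  have x2: "x = E \<alpha>' \<beta>' \<otimes>\<^bsub>Gmnt m n t\<^esub> y \<otimes>\<^bsub>Gmnt m n t\<^esub> E \<gamma>' \<delta>'" using e2 Eform by simp
  have W: "[\<beta> = \<beta>'] (mod int t) \<and> [\<delta> = \<delta>'] (mod int t)"
    by (rule core_word[where E=E and sw=False and ?a1.0=\<alpha> and ?b1.0=\<beta> and ?a2.0=\<gamma> and ?b2.0=\<delta>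
          and a1'=\<alpha>' and b1'=\<beta>' and a2'=\<gamma>' and b2'=\<delta>',
          OF gd tp _ cc dc yc actT actQ w1(3) w1(1) w1(2) w2(3) w2(1) w2(2) _ x1 x2])
       (use n E_def in auto)
  let ?N = "m * t"
  have gE: "good m n t {..<?N} (fE False ?N)" by (rule goodE) (use m n tp in auto)
  have Ec: "[\<alpha> + \<gamma> = \<alpha>' + \<gamma>'] (mod int t)"
  proof (rule core_exp[where E=E and sw=False and ?a1.0=\<alpha> and ?b1.0=\<beta> and ?a2.0=\<gamma> and ?b2.0=\<delta>
          and a1'=\<alpha>' and b1'=\<beta>' and a2'=\<gamma>' and b2'=\<delta>', OF gE refl _ tp cc dc yc _ _ _ _ x1 x2])
    show "0 < m" using m by simp
    show "\<And>a b. E a b = (if False then ?d [^]\<^bsub>Gmnt m n t\<^esub> b \<otimes>\<^bsub>Gmnt m n t\<^esub> ?c [^]\<^bsub>Gmnt m n t\<^esub> a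
                            else ?c [^]\<^bsub>Gmnt m n t\<^esub> a \<otimes>\<^bsub>Gmnt m n t\<^esub> ?d [^]\<^bsub>Gmnt m n t\<^esub> b)"
      by (simp add: E_def)
    show "ActG m n t (fE False ?N) ?c r = (r + m) mod ?N" if r: "r < ?N" for r
      using ActG_cls[OF gE, of r "wpow (ltr False) m"] r fE_pow[where gE=False and g=False and k=m and N="m * t", OF r]
      by (simp add: gen_c_cls actw_wpow)
    show "ActG m n t (fE False ?N) ?d r = r" if r: "r < ?N" for r
      using ActG_cls[OF gE, of r "wpow (ltr True) n"] r fE_pow[where gE=False and g=True and k=n and N="m * t", OF r]
      by (simp add: gen_d_cls actw_wpow)
    show "ActG m n t (fE False ?N) y r = (r + ActG m n t (fE False ?N) y 0) mod ?N" if r: "r < ?N" for r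
    proof -
      obtain w where yw: "y = cls m n t w" using yc unfolding carrier_G by blast
      have N0: "0 < ?N" using m tp by simp
      show ?thesis using ActG_cls[OF gE, of r w] ActG_cls[OF gE, of 0 w] r N0 fE_transl[OF N0 r]
        by (simp add: yw)
    qed
  qed
  show "[\<alpha> + \<gamma> = \<alpha>' + \<gamma>'] (mod int t) \<and> [\<beta> = \<beta>'] (mod int t) \<and> [\<delta> = \<delta>'] (mod int t)"
    using W Ec by blast
qed


lemma lemma2_B:
  fixes m n t :: nat
  assumes m: "1 < m" and n: "1 < n" and t: "1 < t"
  shows "\<forall>x \<in> Bt m n t. \<forall>y \<in> Bt m n t. x \<notin> Ht m n t \<longrightarrow> y \<notin> Ht m n t \<longrightarrow>
            (\<forall>\<alpha> \<beta> \<gamma> \<delta> \<alpha>' \<beta>' \<gamma>' \<delta>' :: int.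
               x = gen_c m n t [^]\<^bsub>Gmnt m n t\<^esub> \<alpha> \<otimes>\<^bsub>Gmnt m n t\<^esub> gen_d m n t [^]\<^bsub>Gmnt m n t\<^esub> \<beta> \<otimes>\<^bsub>Gmnt m n t\<^esub> y \<otimes>\<^bsub>Gmnt m n t\<^esub> gen_c m n t [^]\<^bsub>Gmnt m n t\<^esub> \<gamma> \<otimes>\<^bsub>Gmnt m n t\<^esub> gen_d m n t [^]\<^bsub>Gmnt m n t\<^esub> \<delta> \<longrightarrow>
               x = gen_c m n t [^]\<^bsub>Gmnt m n t\<^esub> \<alpha>' \<otimes>\<^bsub>Gmnt m n t\<^esub> gen_d m n t [^]\<^bsub>Gmnt m n t\<^esub> \<beta>' \<otimes>\<^bsub>Gmnt m n t\<^esub> y \<otimes>\<^bsub>Gmnt m n t\<^esub> gen_c m n t [^]\<^bsub>Gmnt m n t\<^esub> \<gamma>' \<otimes>\<^bsub>Gmnt m n t\<^esub> gen_d m n t [^]\<^bsub>Gmnt m n t\<^esub> \<delta>' \<longrightarrow>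
               [\<beta> + \<delta> = \<beta>' + \<delta>'] (mod int t) \<and> [\<alpha> = \<alpha>'] (mod int t) \<and> [\<gamma> = \<gamma>'] (mod int t))"
proof (intro ballI impI allI)
  interpret group "Gmnt m n t" by (rule group_G)
  have tp: "0 < t" using t by simp
  let ?c = "gen_c m n t" and ?d = "gen_d m n t" and ?b = "gen_b m n t"
  let ?f = "fW True n m t" and ?Y = "YW n m t"
  have bc: "?b \<in> carrier (Gmnt m n t)" by (simp add: gen_b_cls cls_in)
  have cc: "?c \<in> carrier (Gmnt m n t)" by (simp add: gen_c_cls cls_in)
  have dc: "?d \<in> carrier (Gmnt m n t)" by (simp add: gen_d_cls cls_in)
  have Ht: "Ht m n t = generate (Gmnt m n t) {?d, ?c}" by (simp add: Ht_def insert_commute)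
  have Bt: "Bt m n t = generate (Gmnt m n t) (insert ?b (generate (Gmnt m n t) {?d, ?c}))"
    by (simp add: Bt_def Ht_def insert_commute)
  have gd: "good m n t ?Y ?f" by (rule goodW_T) (use m n tp in auto)
  have Zd: "?d = ?b [^]\<^bsub>Gmnt m n t\<^esub> n" by (simp add: gen_d_def)
  have ct: "?c [^]\<^bsub>Gmnt m n t\<^esub> t = \<one>\<^bsub>Gmnt m n t\<^esub>"
    using a_order[of m n t] nat_pow_pow[of "gen_a m n t" m t] by (simp add: gen_c_def gen_a_cls cls_in)
  have ZQ: "?d \<otimes>\<^bsub>Gmnt m n t\<^esub> ?c = ?c \<otimes>\<^bsub>Gmnt m n t\<^esub> ?d" by (rule cd_comm[symmetric])
  have actM: "\<And>x y s. x \<in> carrier (Gmnt m n t) \<Longrightarrow> y \<in> carrier (Gmnt m n t) \<Longrightarrow> s \<in> ?Y \<Longrightarrow>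
      ActG m n t ?f (x \<otimes>\<^bsub>Gmnt m n t\<^esub> y) s = ActG m n t ?f x (ActG m n t ?f y s)"
    using ActG_mult[OF gd] by blast
  have act1: "\<And>s. s \<in> ?Y \<Longrightarrow> ActG m n t ?f \<one>\<^bsub>Gmnt m n t\<^esub> s = s" using ActG_one[OF gd] by blast
  have S: "\<And>w. valid n t w \<Longrightarrow> (w, 0) \<in> ?Y" using m by (simp add: YW_def)
  have actP: "ActG m n t ?f ?b (w, 0) = (Apow n 1 w, 0)" if v: "valid n t w" for w
    using ActG_cls[OF gd S[OF v], of "ltr True"] by (simp add: gen_b_cls ltr_def fW_prim)
  have actQ: "ActG m n t ?f ?c (w, r) = (Dpow t 1 w, r)" if s: "(w, r) \<in> ?Y" for w r
  proof -
    have v: "valid n t w" and r: "r < m" using s by (auto simp: YW_def)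
    have "ActG m n t ?f ?c (w, r) = (?f (False, False) ^^ m) (w, r)"
      using ActG_cls[OF gd s] by (simp add: gen_c_cls actw_wpow)
    also have "\<dots> = (Dpow t ((r + m) div m) w, (r + m) mod m)"
      by (rule sec_pow) (use m tp v r in auto)
    finally show ?thesis using r by simp
  qed
  have actQ0: "\<And>w. valid n t w \<Longrightarrow> ActG m n t ?f ?c (w, 0) = (Dpow t 1 w, 0)" using actQ S by blast
  have actT: "ActG m n t ?f ?d s = s" if s: "s \<in> ?Y" for s
  proof -
    obtain w r where sw: "s = (w, r)" by (cases s)
    have v: "valid n t w" using s sw by (simp add: YW_def)
    have "ActG m n t ?f ?d s = (?f (True, False) ^^ n) (w, r)"
      using ActG_cls[OF gd s] sw by (simp add: gen_d_cls actw_wpow)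
    also have "\<dots> = (Apow n n w, r)" by (rule prim_pow) (use n v in auto)
    also have "\<dots> = s" using Apow_dvd[OF v] n sw by simp
    finally show ?thesis .
  qed
  have rep: "\<exists>w. valid n t w \<and> tlg True w \<noteq> [] \<and> ActG m n t ?f z ([], 0) = (w, 0)"
    if zB: "z \<in> Bt m n t" and zH: "z \<notin> Ht m n t" for z
    by (rule rep_cor[OF bc cc _ tp Zd ct b_order ZQ actM act1 actP actQ0 S])
       (use n zB zH Bt Ht in auto)
  fix x y :: "word set" and \<alpha> \<beta> \<gamma> \<delta> \<alpha>' \<beta>' \<gamma>' \<delta>' :: int
  assume xB: "x \<in> Bt m n t" and yB: "y \<in> Bt m n t" and xH: "x \<notin> Ht m n t" and yH: "y \<notin> Ht m n t"
  assume e1: "x = ?c [^]\<^bsub>Gmnt m n t\<^esub> \<alpha> \<otimes>\<^bsub>Gmnt m n t\<^esub> ?d [^]\<^bsub>Gmnt m n t\<^esub> \<beta> \<otimes>\<^bsub>Gmnt m n t\<^esub> y \<otimes>\<^bsub>Gmnt m n t\<^esub> ?c [^]\<^bsub>Gmnt m n t\<^esub> \<gamma> \<otimes>\<^bsub>Gmnt m n t\<^esub> ?d [^]\<^bsub>Gmnt m n t\<^esub> \<delta>"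
  assume e2: "x = ?c [^]\<^bsub>Gmnt m n t\<^esub> \<alpha>' \<otimes>\<^bsub>Gmnt m n t\<^esub> ?d [^]\<^bsub>Gmnt m n t\<^esub> \<beta>' \<otimes>\<^bsub>Gmnt m n t\<^esub> y \<otimes>\<^bsub>Gmnt m n t\<^esub> ?c [^]\<^bsub>Gmnt m n t\<^esub> \<gamma>' \<otimes>\<^bsub>Gmnt m n t\<^esub> ?d [^]\<^bsub>Gmnt m n t\<^esub> \<delta>'"
  have BSg: "subgroup (Bt m n t) (Gmnt m n t)" unfolding Bt_def
    by (rule generate_is_subgroup) (use bc generate_incl[of "{?d, ?c}"] cc dc Ht in auto)
  have HSg: "subgroup (Ht m n t) (Gmnt m n t)" unfolding Ht
    by (rule generate_is_subgroup) (use cc dc in auto)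
  have yc: "y \<in> carrier (Gmnt m n t)" using yB subgroup.subset[OF BSg] by auto
  obtain w1 where w1: "valid n t w1" "tlg True w1 \<noteq> []" "ActG m n t ?f y ([], 0) = (w1, 0)"
    using rep[OF yB yH] by blast
  have iyB: "inv\<^bsub>Gmnt m n t\<^esub> y \<in> Bt m n t" using subgroup.m_inv_closed[OF BSg yB] .
  have iyH: "inv\<^bsub>Gmnt m n t\<^esub> y \<notin> Ht m n t"
  proof
    assume "inv\<^bsub>Gmnt m n t\<^esub> y \<in> Ht m n t"
    then have "inv\<^bsub>Gmnt m n t\<^esub> (inv\<^bsub>Gmnt m n t\<^esub> y) \<in> Ht m n t" by (rule subgroup.m_inv_closed[OF HSg])
    then show False using yH yc by simp
  qed
  obtain w2 where w2: "valid n t w2" "tlg True w2 \<noteq> []" "ActG m n t ?f (inv\<^bsub>Gmnt m n t\<^esub> y) ([], 0) = (w2, 0)"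
    using rep[OF iyB iyH] by blast
  define E where "E = (\<lambda>(a::int) (b::int). if True then ?c [^]\<^bsub>Gmnt m n t\<^esub> b \<otimes>\<^bsub>Gmnt m n t\<^esub> ?d [^]\<^bsub>Gmnt m n t\<^esub> a
                            else ?d [^]\<^bsub>Gmnt m n t\<^esub> a \<otimes>\<^bsub>Gmnt m n t\<^esub> ?c [^]\<^bsub>Gmnt m n t\<^esub> b)"
  have Eform: "?c [^]\<^bsub>Gmnt m n t\<^esub> a1 \<otimes>\<^bsub>Gmnt m n t\<^esub> ?d [^]\<^bsub>Gmnt m n t\<^esub> b1 \<otimes>\<^bsub>Gmnt m n t\<^esub> y \<otimes>\<^bsub>Gmnt m n t\<^esub> ?c [^]\<^bsub>Gmnt m n t\<^esub> a2 \<otimes>\<^bsub>Gmnt m n t\<^esub> ?d [^]\<^bsub>Gmnt m n t\<^esub> b2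
      = E b1 a1 \<otimes>\<^bsub>Gmnt m n t\<^esub> y \<otimes>\<^bsub>Gmnt m n t\<^esub> E b2 a2" for a1 b1 a2 b2 :: int
    unfolding E_def using cc dc yc by (simp add: m_assoc)
  have x1: "x = E \<beta> \<alpha> \<otimes>\<^bsub>Gmnt m n t\<^esub> y \<otimes>\<^bsub>Gmnt m n t\<^esub> E \<delta> \<gamma>" using e1 Eform by simp
  have x2: "x = E \<beta>' \<alpha>' \<otimes>\<^bsub>Gmnt m n t\<^esub> y \<otimes>\<^bsub>Gmnt m n t\<^esub> E \<delta>' \<gamma>'" using e2 Eform by simp
  have W: "[\<alpha> = \<alpha>'] (mod int t) \<and> [\<gamma> = \<gamma>'] (mod int t)"
    by (rule core_word[where E=E and sw=True and ?a1.0=\<beta> and ?b1.0=\<alpha> and ?a2.0=\<delta> and ?b2.0=\<gamma>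
          and a1'=\<beta>' and b1'=\<alpha>' and a2'=\<delta>' and b2'=\<gamma>',
          OF gd tp _ dc cc yc actT actQ w1(3) w1(1) w1(2) w2(3) w2(1) w2(2) _ x1 x2])
       (use m E_def in auto)
  let ?N = "n * t"
  have gE: "good m n t {..<?N} (fE True ?N)" by (rule goodE) (use m n tp in auto)
  have Ec: "[\<beta> + \<delta> = \<beta>' + \<delta>'] (mod int t)"
  proof (rule core_exp[where E=E and sw=True and ?a1.0=\<beta> and ?b1.0=\<alpha> and ?a2.0=\<delta> and ?b2.0=\<gamma>
          and a1'=\<beta>' and b1'=\<alpha>' and a2'=\<delta>' and b2'=\<gamma>', OF gE refl _ tp dc cc yc _ _ _ _ x1 x2])
    show "0 < n" using n by simp
    show "\<And>a b. E a b = (if True then ?c [^]\<^bsub>Gmnt m n t\<^esub> b \<otimes>\<^bsub>Gmnt m n t\<^esub> ?d [^]\<^bsub>Gmnt m n t\<^esub> a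
                            else ?d [^]\<^bsub>Gmnt m n t\<^esub> a \<otimes>\<^bsub>Gmnt m n t\<^esub> ?c [^]\<^bsub>Gmnt m n t\<^esub> b)"
      by (simp add: E_def)
    show "ActG m n t (fE True ?N) ?d r = (r + n) mod ?N" if r: "r < ?N" for r
      using ActG_cls[OF gE, of r "wpow (ltr True) n"] r fE_pow[where gE=True and g=True and k=n and N="n * t", OF r]
      by (simp add: gen_d_cls actw_wpow)
    show "ActG m n t (fE True ?N) ?c r = r" if r: "r < ?N" for r
      using ActG_cls[OF gE, of r "wpow (ltr False) m"] r fE_pow[where gE=True and g=False and k=m and N="n * t", OF r]
      by (simp add: gen_c_cls actw_wpow)
    show "ActG m n t (fE True ?N) y r = (r + ActG m n t (fE True ?N) y 0) mod ?N" if r: "r < ?N" for r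
    proof -
      obtain w where yw: "y = cls m n t w" using yc unfolding carrier_G by blast
      have N0: "0 < ?N" using n tp by simp
      show ?thesis using ActG_cls[OF gE, of r w] ActG_cls[OF gE, of 0 w] r N0 fE_transl[OF N0 r]
        by (simp add: yw)
    qed
  qed
  show "[\<beta> + \<delta> = \<beta>' + \<delta>'] (mod int t) \<and> [\<alpha> = \<alpha>'] (mod int t) \<and> [\<gamma> = \<gamma>'] (mod int t)"
    using W Ec by blast
qed


theorem lemma2:
  fixes m n t :: nat
  assumes "m > 1" and "n > 1" and "t > 1"
  defines "G \<equiv> Gmnt m n t" and "c \<equiv> gen_c m n t" and "d \<equiv> gen_d m n t"
  shows "(\<forall>x \<in> At m n t. \<forall>y \<in> At m n t. x \<notin> Ht m n t \<longrightarrow> y \<notin> Ht m n t \<longrightarrow>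
            (\<forall>\<alpha> \<beta> \<gamma> \<delta> \<alpha>' \<beta>' \<gamma>' \<delta>' :: int.
               x = c [^]\<^bsub>G\<^esub> \<alpha> \<otimes>\<^bsub>G\<^esub> d [^]\<^bsub>G\<^esub> \<beta> \<otimes>\<^bsub>G\<^esub> y \<otimes>\<^bsub>G\<^esub> c [^]\<^bsub>G\<^esub> \<gamma> \<otimes>\<^bsub>G\<^esub> d [^]\<^bsub>G\<^esub> \<delta> \<longrightarrow>
               x = c [^]\<^bsub>G\<^esub> \<alpha>' \<otimes>\<^bsub>G\<^esub> d [^]\<^bsub>G\<^esub> \<beta>' \<otimes>\<^bsub>G\<^esub> y \<otimes>\<^bsub>G\<^esub> c [^]\<^bsub>G\<^esub> \<gamma>' \<otimes>\<^bsub>G\<^esub> d [^]\<^bsub>G\<^esub> \<delta>' \<longrightarrow>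
               [\<alpha> + \<gamma> = \<alpha>' + \<gamma>'] (mod int t) \<and> [\<beta> = \<beta>'] (mod int t) \<and> [\<delta> = \<delta>'] (mod int t)))
       \<and> (\<forall>x \<in> Bt m n t. \<forall>y \<in> Bt m n t. x \<notin> Ht m n t \<longrightarrow> y \<notin> Ht m n t \<longrightarrow>
            (\<forall>\<alpha> \<beta> \<gamma> \<delta> \<alpha>' \<beta>' \<gamma>' \<delta>' :: int.
               x = c [^]\<^bsub>G\<^esub> \<alpha> \<otimes>\<^bsub>G\<^esub> d [^]\<^bsub>G\<^esub> \<beta> \<otimes>\<^bsub>G\<^esub> y \<otimes>\<^bsub>G\<^esub> c [^]\<^bsub>G\<^esub> \<gamma> \<otimes>\<^bsub>G\<^esub> d [^]\<^bsub>G\<^esub> \<delta> \<longrightarrow>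
               x = c [^]\<^bsub>G\<^esub> \<alpha>' \<otimes>\<^bsub>G\<^esub> d [^]\<^bsub>G\<^esub> \<beta>' \<otimes>\<^bsub>G\<^esub> y \<otimes>\<^bsub>G\<^esub> c [^]\<^bsub>G\<^esub> \<gamma>' \<otimes>\<^bsub>G\<^esub> d [^]\<^bsub>G\<^esub> \<delta>' \<longrightarrow>
               [\<beta> + \<delta> = \<beta>' + \<delta>'] (mod int t) \<and> [\<alpha> = \<alpha>'] (mod int t) \<and> [\<gamma> = \<gamma>'] (mod int t)))"
proof -
  show ?thesis unfolding G_def c_def d_def
    using lemma2_A[OF assms(1-3)] lemma2_B[OF assms(1-3)] by blast
qed



end
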